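(* Fix $\alpha\in(0,1/2)$, $m$, $n$. For all sufficiently large $T$, in every run of Algorithm 1 in which the small gradient assumption holds, the regret $\sum_{t=1}^T L^t(\mathbf{w}^t) - \min_{\mathbf{w}\in\Delta^m}\sum_{t=1}^T L^t(\mathbf{w})$ is at most \[\left(240 + \frac{12}{\alpha}\right) m^{(3-\alpha)/2}\, n\, \sqrt{T}\ln T.\]
   Context: Setting. There are $m$ experts and $n$ outcomes; $\Delta^k$ is the probability simplex in $\mathbb{R}^k$. For reports $\mathbf{p}^1,\dots,\mathbf{p}^m\in\Delta^n$ and $\mathbf{w}\in\Delta^m$, the logarithmic pool is $p^*_j(\mathbf{w}) = \frac{\prod_k (p^k_j)^{w_k}}{\sum_{\ell}\prod_k (p^k_\ell)^{w_k}}$. At each time $t\in[T]$, reports $\mathbf{p}^{t,1},\dots,\mathbf{p}^{t,m}$ and an outcome $j_t$ are revealed, with loss $L^t(\mathbf{w}) := -\ln p^*_{j_t}(\mathbf{w})$ and, by convention, $\partial_i L^t(\mathbf{w}) := \sum_{\ell} p^*_\ell(\mathbf{w}) \ln p^{t,i}_\ell - \ln p^{t,i}_{j_t}$. Algorithm 1 (parameter $\alpha \in (0,1/2)$): $R(\mathbf{w}) = -\frac{1}{\alpha}\sum_i w_i^\alpha$, $\eta = \frac{1}{\sqrt{T}\ln T}\cdot\frac{1}{12 m^{(1+\alpha)/2} n}$, $\mathbf{w}^1 = (1/m,\dots,1/m)$, $\eta_0=+\infty$. For $t=1,\dots,T$: if $\eta \le \min_i (w_i^t)^\alpha$ set $\eta_t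 = \min(\eta_{t-1},\eta)$, else $\eta_t = \min(\eta_{t-1}, \min_i w_i^t)$; then $\mathbf{w}^{t+1}\in\Delta^m$ is defined by $-(w_i^{t+1})^{\alpha-1} = -(w_i^t)^{\alpha-1} - \eta_t\partial_i L^t(\mathbf{w}^t) + c$ for all $i$, with $c$ the unique constant making $\sum_i w_i^{t+1}=1$. Let $\gamma := 12 n \ln T$. The small gradient assumption holds for a run if for every $t\in[T]$ and $i\in[m]$: $-\frac{\gamma}{w_i^t} \le \partial_i L^t(\mathbf{w}^t) \le \gamma$. *)

theory Defs
  imports "HOL-Analysis.Analysis"
begin

text \<open>Experts are indexed by i < m, outcomes by j < n, time steps by t \<in> {1..T}.
  Vectors are functions nat \<Rightarrow> real; only the entries with index below the
  dimension matter.\<close>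

definition prob_simplex :: "nat \<Rightarrow> (nat \<Rightarrow> real) set" where
  "prob_simplex k = {w. (\<forall>i<k. 0 \<le> w i) \<and> (\<Sum>i<k. w i) = 1}"

definition log_pool :: "nat \<Rightarrow> nat \<Rightarrow> (nat \<Rightarrow> nat \<Rightarrow> real) \<Rightarrow> (nat \<Rightarrow> real) \<Rightarrow> nat \<Rightarrow> real" where
  "log_pool m n p w j =
     (\<Prod>k<m. p k j powr w k) / (\<Sum>l<n. \<Prod>k<m. p k l powr w k)"

definition loss :: "nat \<Rightarrow> nat \<Rightarrow> (nat \<Rightarrow> nat \<Rightarrow> nat \<Rightarrow> real) \<Rightarrow> (nat \<Rightarrow> nat) \<Rightarrow> nat \<Rightarrow> (nat \<Rightarrow> real) \<Rightarrow> real" where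
  "loss m n P J t w = - ln (log_pool m n (P t) w (J t))"

definition grad :: "nat \<Rightarrow> nat \<Rightarrow> (nat \<Rightarrow> nat \<Rightarrow> nat \<Rightarrow> real) \<Rightarrow> (nat \<Rightarrow> nat) \<Rightarrow> nat \<Rightarrow> (nat \<Rightarrow> real) \<Rightarrow> nat \<Rightarrow> real" where
  "grad m n P J t w i =
     (\<Sum>l<n. log_pool m n (P t) w l * ln (P t i l)) - ln (P t i (J t))"

definition eta0 :: "real \<Rightarrow> nat \<Rightarrow> nat \<Rightarrow> nat \<Rightarrow> real" where
  "eta0 \<alpha> m n T = 1 / (sqrt T * ln T) * (1 / (12 * real m powr ((1 + \<alpha>) / 2) * real n))"

definition eta_cand :: "real \<Rightarrow> nat \<Rightarrow> nat \<Rightarrow> nat \<Rightarrow> (nat \<Rightarrow> nat \<Rightarrow> real) \<Rightarrow> nat \<Rightarrow> real" where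
  "eta_cand \<alpha> m n T w t =
     (if eta0 \<alpha> m n T \<le> Min ((\<lambda>i. w t i powr \<alpha>) ` {..<m})
      then eta0 \<alpha> m n T else Min ((\<lambda>i. w t i) ` {..<m}))"

text \<open>\<eta>_t = min(\<eta>_{t-1}, candidate_t) with \<eta>_0 = +\<infinity>, i.e. the minimum of the
  candidates at steps 1..t.\<close>
definition eta_t :: "real \<Rightarrow> nat \<Rightarrow> nat \<Rightarrow> nat \<Rightarrow> (nat \<Rightarrow> nat \<Rightarrow> real) \<Rightarrow> nat \<Rightarrow> real" where
  "eta_t \<alpha> m n T w t = Min (eta_cand \<alpha> m n T w ` {1..t})"

definition alg1_run :: "real \<Rightarrow> nat \<Rightarrow> nat \<Rightarrow> nat \<Rightarrow> (nat \<Rightarrow> nat \<Rightarrow> nat \<Rightarrow> real) \<Rightarrow> (nat \<Rightarrow> nat) \<Rightarrow> (nat \<Rightarrow> nat \<Rightarrow> real) \<Rightarrow> bool" where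
  "alg1_run \<alpha> m n T P J w \<longleftrightarrow>
     (\<forall>t\<in>{1..T}. (\<forall>i<m. (\<forall>j<n. 0 < P t i j) \<and> (\<Sum>j<n. P t i j) = 1) \<and> J t < n) \<and>
     (\<forall>i<m. w 1 i = 1 / real m) \<and>
     (\<forall>t\<in>{1..T}. w t \<in> prob_simplex m \<and> (\<forall>i<m. 0 < w t i)) \<and>
     (\<forall>t\<in>{1..<T}. \<exists>c. \<forall>i<m.
        - (w (t + 1) i powr (\<alpha> - 1)) =
          - (w t i powr (\<alpha> - 1)) - eta_t \<alpha> m n T w t * grad m n P J t (w t) i + c)"

definition small_gradient :: "nat \<Rightarrow> nat \<Rightarrow> nat \<Rightarrow> (nat \<Rightarrow> nat \<Rightarrow> nat \<Rightarrow> real) \<Rightarrow> (nat \<Rightarrow> nat) \<Rightarrow> (nat \<Rightarrow> nat \<Rightarrow> real) \<Rightarrow> bool" where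
  "small_gradient m n T P J w \<longleftrightarrow>
     (\<forall>t\<in>{1..T}. \<forall>i<m.
        - (12 * real n * ln T) / w t i \<le> grad m n P J t (w t) i \<and>
        grad m n P J t (w t) i \<le> 12 * real n * ln T)"

definition regret :: "nat \<Rightarrow> nat \<Rightarrow> nat \<Rightarrow> (nat \<Rightarrow> nat \<Rightarrow> nat \<Rightarrow> real) \<Rightarrow> (nat \<Rightarrow> nat) \<Rightarrow> (nat \<Rightarrow> nat \<Rightarrow> real) \<Rightarrow> real" where
  "regret m n T P J w =
     (\<Sum>t=1..T. loss m n P J t (w t)) -
     (INF u\<in>prob_simplex m. \<Sum>t=1..T. loss m n P J t u)"

end

theory Submission
  imports Defs "HOL-Analysis.Analysis"
begin


lemma bern_convex:
  fixes p y :: real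
  assumes "0 < y" and "0 \<le> p * (p - 1)"
  shows "1 + p * (y - 1) \<le> y powr p"
proof -
  have "p * 1 powr (p - 1) * (y - 1) \<le> y powr p - 1 powr p"
  proof (rule f''_imp_f'[where C="{0<..}" and f="\<lambda>y. y powr p" and f'="\<lambda>y. p * y powr (p - 1)"
        and f''="\<lambda>y. p * ((p - 1) * y powr (p - 1 - 1))"])
    show "\<And>x. x \<in> {0<..} \<Longrightarrow> ((\<lambda>y. y powr p) has_real_derivative p * x powr (p - 1)) (at x)"
      by (auto intro!: derivative_eq_intros)
    show "\<And>x. x \<in> {0<..} \<Longrightarrow> ((\<lambda>y. p * y powr (p - 1)) has_real_derivative p * ((p - 1) * x powr (p - 1 - 1))) (at x)"
      by (auto intro!: derivative_eq_intros)
    show "\<And>x. x \<in> {0<..} \<Longrightarrow> 0 \<le> p * ((p - 1) * x powr (p - 1 - 1))"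
      using assms(2) by (metis mult.assoc mult_nonneg_nonneg powr_ge_zero)
  qed (use assms in auto)
  then show ?thesis by simp
qed

lemma bern_concave:
  fixes p y :: real
  assumes "0 \<le> y" and "0 \<le> p" "p \<le> 1"
  shows "y powr p \<le> 1 + p * (y - 1)"
proof (cases "y = 0")
  case True then show ?thesis using assms by simp
next
  case False
  have "(-p) * 1 powr (p - 1) * (y - 1) \<le> (- (y powr p)) - (- (1 powr p))"
  proof (rule f''_imp_f'[where C="{0<..}" and f="\<lambda>y. - (y powr p)" and f'="\<lambda>y. -p * y powr (p - 1)"
        and f''="\<lambda>y. -p * ((p - 1) * y powr (p - 1 - 1))"])
    show "\<And>x. x \<in> {0<..} \<Longrightarrow> ((\<lambda>y. - (y powr p)) has_real_derivative -p * x powr (p - 1)) (at x)"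
      by (auto intro!: derivative_eq_intros)
    show "\<And>x. x \<in> {0<..} \<Longrightarrow> ((\<lambda>y. -p * y powr (p - 1)) has_real_derivative -p * ((p - 1) * x powr (p - 1 - 1))) (at x)"
      by (auto intro!: derivative_eq_intros)
    show "\<And>x. x \<in> {0<..} \<Longrightarrow> 0 \<le> -p * ((p - 1) * x powr (p - 1 - 1))"
      using assms by (simp add: mult_nonneg_nonpos mult_nonpos_nonneg)
  qed (use assms False in auto)
  then show ?thesis by simp
qed



lemma x_ge1:
  fixes a w w' :: real
  assumes "0 < w" "w \<le> 1" "a < 1" shows "1 \<le> w powr (a - 1)"
  using powr_mono2'[of "a - 1" w 1] assms by simp

lemma x_pos:
  fixes a w w' :: real
  assumes "0 < w" shows "0 < w powr (a - 1)"
  using assms by simp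

lemma SB:
  fixes a w w' :: real
 
  assumes "0 < w" "0 < w'" "a < 1"
  shows "w - w' \<le> (1/(1-a)) * w * (w' powr (a-1) - w powr (a-1)) / w powr (a-1)"
proof -
  define x where "x = w powr (a-1)"
  define x' where "x' = w' powr (a-1)"
  define p where "p = - 1/(1-a)"
  have xp: "0 < x" "0 < x'" using assms by (auto simp: x_def x'_def)
  have pp: "0 \<le> p * (p - 1)" using assms unfolding p_def
    by (intro mult_nonpos_nonpos) (auto simp: field_simps)
  have b: "1 + p * (x'/x - 1) \<le> (x'/x) powr p"
    using bern_convex[OF _ pp, of "x'/x"] xp by simp
  have ap: "(a-1) * p = 1" unfolding p_def using assms by (simp add: field_simps)
  have e1: "x powr p = w" unfolding x_def using assms
    by (simp add: powr_powr ap)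
  have e2: "x' powr p = w'" unfolding x'_def using assms
    by (simp add: powr_powr ap)
  have "(x'/x) powr p = w'/w" by (simp add: powr_divide e1 e2)
  with b have "1 + p * (x'/x - 1) \<le> w'/w" by simp
  then have "w * (1 + p * (x'/x - 1)) \<le> w'"
    using assms by (simp add: field_simps)
  then show ?thesis unfolding x_def[symmetric] x'_def[symmetric] p_def
    using xp by (simp add: field_simps)
qed

lemma SD:
  fixes a w w' :: real
  assumes "0 < w" shows "w powr a = w * w powr (a - 1)"
proof -
  have "w * w powr (a - 1) = w powr 1 * w powr (a - 1)" using assms by simp
  also have "\<dots> = w powr (1 + (a - 1))" by (simp only: powr_add)
  finally show ?thesis by simp
qed

lemma Sinv:
  fixes a w w' :: real
  assumes "0 < w" "a < 1" shows "(w powr (a-1)) powr (1/(1-a)) = 1 / w"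
proof -
  have ee: "(a-1) * (1/(1-a)) = -1" using assms by (simp add: field_simps)
  have "(w powr (a-1)) powr (1/(1-a)) = w powr (- 1)"
    using assms by (simp only: powr_powr ee)
  then show ?thesis using assms by (simp add: powr_minus divide_inverse)
qed

lemma Swa:
  fixes a w w' :: real
  assumes "0 < w" "a < 1" shows "w powr a = (w powr (a-1)) powr (1 - 1/(1-a))"
proof -
  have ee: "(a-1) * (1 - 1/(1-a)) = a" using assms by (simp add: field_simps)
  show ?thesis by (simp only: powr_powr ee)
qed

lemma Sln:
  fixes a w w' :: real
 
  assumes "0 < w" "0 < w'" "a < 1"
  shows "ln w - ln w' \<le> (1/(1-a)) * (w' powr (a-1) - w powr (a-1)) / w powr (a-1)"
proof -
  define x where "x = w powr (a-1)"
  define x' where "x' = w' powr (a-1)"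
  have xp: "0 < x" "0 < x'" using assms by (auto simp: x_def x'_def)
  have l1: "ln x = (a-1) * ln w" "ln x' = (a-1) * ln w'" using assms by (auto simp: x_def x'_def)
  have "ln (x'/x) \<le> x'/x - 1" using xp by (intro ln_le_minus_one) simp
  then have "ln x' - ln x \<le> (x' - x)/x" using xp by (simp add: ln_div field_simps)
  then have "(a-1) * (ln w' - ln w) \<le> (x' - x)/x" using l1 by (simp add: algebra_simps)
  then have "(1 - a) * (ln w - ln w') \<le> (x' - x)/x" by (simp add: algebra_simps)
  moreover have "0 < 1 - a" using assms by simp
  ultimately have "ln w - ln w' \<le> (x' - x)/x / (1 - a)" by (subst pos_le_divide_eq) (auto simp: mult.commute)
  then show ?thesis unfolding x_def[symmetric] x'_def[symmetric] by (simp add: field_simps)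
qed

lemma SG:
  fixes a w w' :: real
 
  assumes "0 < w" "0 < w'" "0 < a" "a < 1/2"
    and "(29/30) * w powr (a-1) \<le> w' powr (a-1)"
  shows "w' / w \<le> 11/10"
proof -
  define x where "x = w powr (a-1)"
  define x' where "x' = w' powr (a-1)"
  define p where "p = - 1/(1-a)"
  have xp: "0 < x" "0 < x'" using assms by (auto simp: x_def x'_def)
  have ap: "(a-1) * p = 1" unfolding p_def using assms by (simp add: field_simps)
  have e1: "x powr p = w" unfolding x_def using assms
    by (simp add: powr_powr ap)
  have e2: "x' powr p = w'" unfolding x'_def using assms
    by (simp add: powr_powr ap)
  have r: "w'/w = (x'/x) powr p" by (simp add: powr_divide e1 e2)
  have y: "29/30 \<le> x'/x" using assms xp by (simp add: x_def x'_def field_simps)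
  have pn: "p \<le> 0" using assms by (simp add: p_def field_simps)
  have "(x'/x) powr p \<le> (29/30) powr p" by (rule powr_mono2'[OF pn _ y]) simp
  also have "(29/30::real) powr p = (30/29) powr (1/(1-a))"
  proof -
    have "p = - (1/(1-a))" by (simp add: p_def)
    then have "(29/30::real) powr p = inverse ((29/30) powr (1/(1-a)))" by (simp only: powr_minus)
    also have "\<dots> = (inverse (29/30)) powr (1/(1-a))" by (simp only: inverse_powr)
    finally show ?thesis by simp
  qed
  also have "\<dots> \<le> (30/29) powr (2::real)"
    using assms by (intro powr_mono) (auto simp: field_simps)
  also have "\<dots> \<le> 11/10" by (simp add: powr_numeral power2_eq_square)
  finally show ?thesis using r by simp
qed

lemma SH:
  fixes y :: real
  assumes "0 < y" shows "y - 1 \<le> y * ln y"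
proof -
  have "ln (1/y) \<le> 1/y - 1" using assms by (intro ln_le_minus_one) simp
  then have "- ln y \<le> 1/y - 1" using assms by (simp add: ln_div)
  then have "y * (- ln y) \<le> y * (1/y - 1)" using assms by (intro mult_left_mono) auto
  moreover have "y * (1/y - 1) = 1 - y" using assms by (simp add: field_simps)
  ultimately show ?thesis by simp
qed

lemma pm1:
  fixes w :: "nat \<Rightarrow> real"
  assumes "1 \<le> m" "\<forall>i<m. 0 \<le> w i" "(\<Sum>i<m. w i) = 1" "0 \<le> a" "a \<le> 1"
  shows "(\<Sum>i<m. w i powr (1-a)) \<le> real m powr a"
proof -
  have mp: "0 < real m" using assms by simp
  have "w i powr (1-a) \<le> (1 + (1-a) * (m * w i - 1)) / real m powr (1-a)" if "i < m" for i
  proof -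
    have "(m * w i) powr (1-a) \<le> 1 + (1-a) * (m * w i - 1)"
      using assms that by (intro bern_concave) auto
    moreover have "(m * w i) powr (1-a) = real m powr (1-a) * w i powr (1-a)"
      using assms that by (simp add: powr_mult)
    ultimately show ?thesis using mp by (simp add: field_simps)
  qed
  then have "(\<Sum>i<m. w i powr (1-a)) \<le> (\<Sum>i<m. (1 + (1-a) * (m * w i - 1)) / real m powr (1-a))"
    by (intro sum_mono) auto
  also have "\<dots> = (\<Sum>i<m. (1 + (1-a) * (m * w i - 1))) / real m powr (1-a)"
    by (simp add: sum_divide_distrib)
  also have "(\<Sum>i<m. (1 + (1-a) * (m * w i - 1))) = m + (1-a) * (m * (\<Sum>i<m. w i) - m)"
    by (simp add: sum.distrib sum_distrib_left sum_subtractf algebra_simps)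
  also have "\<dots> = m" using assms by simp
  also have "real m / real m powr (1-a) = real m powr a"
    using mp by (simp add: powr_diff)
  finally show ?thesis .
qed

lemma pm2:
  fixes w :: "nat \<Rightarrow> real"
  assumes "1 \<le> m" "\<forall>i<m. 0 < w i" "(\<Sum>i<m. w i) = 1" "0 \<le> a" "a \<le> 1"
  shows "real m powr (a-1) \<le> (\<Sum>i<m. w i powr (2-a))"
proof -
  have mp: "0 < real m" using assms by simp
  have "(1 + (2-a) * (m * w i - 1)) / real m powr (2-a) \<le> w i powr (2-a)" if "i < m" for i
  proof -
    have "1 + (2-a) * (m * w i - 1) \<le> (m * w i) powr (2-a)"
      using assms that by (intro bern_convex) auto
    moreover have "(m * w i) powr (2-a) = real m powr (2-a) * w i powr (2-a)"
      using assms that by (simp add: powr_mult)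
    ultimately show ?thesis using mp by (simp add: field_simps)
  qed
  then have "(\<Sum>i<m. (1 + (2-a) * (m * w i - 1)) / real m powr (2-a)) \<le> (\<Sum>i<m. w i powr (2-a))"
    by (intro sum_mono) auto
  moreover have "(\<Sum>i<m. (1 + (2-a) * (m * w i - 1)) / real m powr (2-a))
      = (\<Sum>i<m. (1 + (2-a) * (m * w i - 1))) / real m powr (2-a)"
    by (simp add: sum_divide_distrib)
  moreover have "(\<Sum>i<m. (1 + (2-a) * (m * w i - 1))) = m + (2-a) * (m * (\<Sum>i<m. w i) - m)"
    by (simp add: sum.distrib sum_distrib_left sum_subtractf algebra_simps)
  moreover have "real m / real m powr (2-a) = real m powr (a-1)"
  proof -
    have "real m / real m powr (2-a) = real m powr 1 / real m powr (2-a)" using mp by simp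
    also have "\<dots> = real m powr (1 - (2-a))" by (simp only: powr_diff)
    finally show ?thesis by simp
  qed
  ultimately show ?thesis using assms by simp
qed



definition Zf :: "nat \<Rightarrow> (nat \<Rightarrow> nat \<Rightarrow> real) \<Rightarrow> (nat \<Rightarrow> real) \<Rightarrow> nat \<Rightarrow> real" where
  "Zf m p w l = (\<Sum>i<m. w i * ln (p i l))"

lemma pool_exp:
  assumes "\<forall>i<m. 0 < p i l"
  shows "(\<Prod>k<m. p k l powr w k) = exp (Zf m p w l)"
proof -
  have "(\<Prod>k<m. p k l powr w k) = (\<Prod>k<m. exp (w k * ln (p k l)))"
    using assms by (intro prod.cong) (auto simp: powr_def)
  also have "\<dots> = exp (Zf m p w l)" by (simp add: Zf_def exp_sum)
  finally show ?thesis .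
qed

lemma pool_eq:
  assumes "\<forall>i<m. \<forall>j<n. 0 < p i j" "l < n"
  shows "log_pool m n p w l = exp (Zf m p w l) / (\<Sum>l'<n. exp (Zf m p w l'))"
  using assms unfolding log_pool_def
  by (simp add: pool_exp)

lemma S_pos:
  assumes "J < n" shows "0 < (\<Sum>l'<n. exp (Zf m p w l'))"
  using assms by (intro sum_pos) auto

lemma loss_eq:
  assumes "\<forall>i<m. \<forall>j<n. 0 < p i j" "J < n"
  shows "- ln (log_pool m n p w J) = ln (\<Sum>l'<n. exp (Zf m p w l')) - Zf m p w J"
proof -
  have "0 < (\<Sum>l'<n. exp (Zf m p w l'))" using S_pos[OF assms(2)] .
  then show ?thesis using assms by (simp add: pool_eq ln_div)
qed

lemma pool_sum1:
  assumes "\<forall>i<m. \<forall>j<n. 0 < p i j" "J < n"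
  shows "(\<Sum>l<n. log_pool m n p w l) = 1"
proof -
  have "(\<Sum>l<n. log_pool m n p w l) = (\<Sum>l<n. exp (Zf m p w l) / (\<Sum>l'<n. exp (Zf m p w l')))"
    using assms by (intro sum.cong) (auto simp: pool_eq)
  also have "\<dots> = (\<Sum>l<n. exp (Zf m p w l)) / (\<Sum>l'<n. exp (Zf m p w l'))"
    by (simp only: sum_divide_distrib)
  finally have e: "(\<Sum>l<n. log_pool m n p w l) = (\<Sum>l<n. exp (Zf m p w l)) / (\<Sum>l'<n. exp (Zf m p w l'))" .
  have ne: "(\<Sum>l<n. exp (Zf m p w l)) \<noteq> 0" using S_pos[OF assms(2), of m p w] by simp
  show ?thesis using e divide_self[OF ne] by linarith
qed

lemma tangent:
  assumes pos: "\<forall>i<m. \<forall>j<n. 0 < p i j" and J: "J < n"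
  shows "- ln (log_pool m n p w J) + (\<Sum>i<m. (u i - w i) *
            ((\<Sum>l<n. log_pool m n p w l * ln (p i l)) - ln (p i J)))
         \<le> - ln (log_pool m n p u J)"
proof -
  define S where "S v = (\<Sum>l'<n. exp (Zf m p v l'))" for v
  define q where "q l = log_pool m n p w l" for l
  define d where "d l = Zf m p u l - Zf m p w l" for l
  define \<mu> where "\<mu> = (\<Sum>l<n. q l * d l)"
  have Sp: "0 < S v" for v unfolding S_def using S_pos[OF J] .
  have q: "\<And>l. l < n \<Longrightarrow> q l = exp (Zf m p w l) / S w"
    unfolding q_def S_def using pos by (simp add: pool_eq)
  have q1: "(\<Sum>l<n. q l) = 1" unfolding q_def using pool_sum1[OF pos J] .
  have qpos: "\<And>l. l < n \<Longrightarrow> 0 \<le> q l" using q Sp by (simp add: less_imp_le)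
  have Su: "S u = S w * (\<Sum>l<n. q l * exp (d l))"
  proof -
    have "S u = (\<Sum>l<n. exp (Zf m p w l) * exp (d l))"
      unfolding S_def d_def by (intro sum.cong) (auto simp: exp_add[symmetric])
    also have "\<dots> = (\<Sum>l<n. S w * (q l * exp (d l)))"
    proof (intro sum.cong refl)
      fix l assume "l \<in> {..<n}"
      moreover have "S w \<noteq> 0" using Sp[of w] by simp
      ultimately show "exp (Zf m p w l) * exp (d l) = S w * (q l * exp (d l))" by (simp add: q)
    qed
    finally show ?thesis by (simp add: sum_distrib_left)
  qed
  have "(\<Sum>l<n. q l * (exp \<mu> * (1 + (d l - \<mu>)))) \<le> (\<Sum>l<n. q l * exp (d l))"
  proof (intro sum_mono mult_left_mono)
    fix l assume "l \<in> {..<n}"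
    have "exp \<mu> * (1 + (d l - \<mu>)) \<le> exp \<mu> * exp (d l - \<mu>)"
      by (intro mult_left_mono) auto
    also have "\<dots> = exp (d l)" by (simp add: exp_diff)
    finally show "exp \<mu> * (1 + (d l - \<mu>)) \<le> exp (d l)" .
    show "0 \<le> q l" using qpos \<open>l \<in> {..<n}\<close> by simp
  qed
  moreover have "(\<Sum>l<n. q l * (exp \<mu> * (1 + (d l - \<mu>)))) = exp \<mu> * ((\<Sum>l<n. q l) + (\<Sum>l<n. q l * d l) - \<mu> * (\<Sum>l<n. q l))"
    by (simp add: sum_distrib_left sum_distrib_right sum.distrib sum_subtractf algebra_simps)
  ultimately have "exp \<mu> \<le> (\<Sum>l<n. q l * exp (d l))" using q1 by (simp add: \<mu>_def)
  then have "S w * exp \<mu> \<le> S u" using Su Sp by (simp add: mult_left_mono)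
  then have "ln (S w * exp \<mu>) \<le> ln (S u)" using Sp by simp
  then have lnS: "ln (S w) + \<mu> \<le> ln (S u)" using Sp[of w] by (simp add: ln_mult)
  have dl: "d l = (\<Sum>i<m. (u i - w i) * ln (p i l))" for l
    unfolding d_def Zf_def by (simp add: sum_subtractf algebra_simps)
  have mu: "\<mu> = (\<Sum>i<m. (u i - w i) * (\<Sum>l<n. q l * ln (p i l)))"
    unfolding \<mu>_def dl by (simp add: sum_distrib_left sum.swap[of _ "{..<n}"] algebra_simps)
  have "(\<Sum>i<m. (u i - w i) * ((\<Sum>l<n. q l * ln (p i l)) - ln (p i J)))
        = \<mu> - d J"
  proof -
    have "\<mu> - d J = (\<Sum>i<m. (u i - w i) * (\<Sum>l<n. q l * ln (p i l)) - (u i - w i) * ln (p i J))"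
      unfolding mu dl[of J] by (simp only: sum_subtractf)
    also have "\<dots> = (\<Sum>i<m. (u i - w i) * ((\<Sum>l<n. q l * ln (p i l)) - ln (p i J)))"
      by (intro sum.cong) (auto simp: algebra_simps)
    finally show ?thesis by simp
  qed
  moreover have "- ln (log_pool m n p u J) = ln (S u) - Zf m p u J"
    unfolding S_def by (rule loss_eq[OF pos J])
  moreover have "- ln (log_pool m n p w J) = ln (S w) - Zf m p w J"
    unfolding S_def by (rule loss_eq[OF pos J])
  ultimately show ?thesis using lnS unfolding q_def d_def by simp
qed

lemma loss_upper:
  assumes pos: "\<forall>i<m. \<forall>j<n. 0 < p i j" and J: "J < n"
  shows "- ln (log_pool m n p w J) \<le> (\<Sum>i<m. w i *
            ((\<Sum>l<n. log_pool m n p w l * ln (p i l)) - ln (p i J))) + real n"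
proof -
  define S where "S = (\<Sum>l'<n. exp (Zf m p w l'))"
  define q where "q l = log_pool m n p w l" for l
  have Sp: "0 < S" unfolding S_def using S_pos[OF J] .
  have q: "\<And>l. l < n \<Longrightarrow> q l = exp (Zf m p w l) / S"
    unfolding q_def S_def using pos by (simp add: pool_eq)
  have q1: "(\<Sum>l<n. q l) = 1" unfolding q_def using pool_sum1[OF pos J] .
  have lnq: "\<And>l. l < n \<Longrightarrow> ln (q l) = Zf m p w l - ln S"
    using q Sp by (simp add: ln_div)
  have qpos: "\<And>l. l < n \<Longrightarrow> 0 < q l" using q Sp by simp
  have "(\<Sum>i<m. w i * ((\<Sum>l<n. q l * ln (p i l)) - ln (p i J)))
      = (\<Sum>l<n. q l * Zf m p w l) - Zf m p w J"
    unfolding Zf_def by (simp add: sum_distrib_left sum_subtractf sum.swap[of _ "{..<n}"] algebra_simps)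
  also have "(\<Sum>l<n. q l * Zf m p w l) = (\<Sum>l<n. q l * ln (q l)) + ln S"
  proof -
    have "(\<Sum>l<n. q l * Zf m p w l) = (\<Sum>l<n. q l * ln (q l) + q l * ln S)"
      by (intro sum.cong) (auto simp: lnq algebra_simps)
    also have "\<dots> = (\<Sum>l<n. q l * ln (q l)) + ln S"
      by (simp add: sum.distrib sum_distrib_right[symmetric] q1)
    finally show ?thesis .
  qed
  finally have e: "(\<Sum>i<m. w i * ((\<Sum>l<n. q l * ln (p i l)) - ln (p i J)))
       = (\<Sum>l<n. q l * ln (q l)) + (ln S - Zf m p w J)" by simp
  have "- (\<Sum>l<n. q l * ln (q l)) \<le> (\<Sum>l<n. 1)"
  proof -
    have "- (\<Sum>l<n. q l * ln (q l)) = (\<Sum>l<n. q l * (- ln (q l)))" by (simp add: sum_negf)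
    also have "\<dots> \<le> (\<Sum>l<n. 1)"
    proof (intro sum_mono)
      fix l assume l: "l \<in> {..<n}"
      have ql: "0 < q l" using qpos l by simp
      have "ln (1 / q l) \<le> 1 / q l - 1" using ql by (intro ln_le_minus_one) simp
      then have "- ln (q l) \<le> 1 / q l - 1" using ql by (simp add: ln_div)
      then have "q l * (- ln (q l)) \<le> q l * (1 / q l - 1)" using ql by (intro mult_left_mono) auto
      also have "\<dots> = 1 - q l" using ql by (simp add: field_simps)
      also have "\<dots> \<le> 1" using qpos l by (simp add: less_imp_le)
      finally show "q l * (- ln (q l)) \<le> 1" .
    qed
    finally show ?thesis .
  qed
  moreover have "- ln (log_pool m n p w J) = ln S - Zf m p w J"
    unfolding S_def by (rule loss_eq[OF pos J])
  ultimately show ?thesis using e unfolding q_def by simp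
qed

lemma loss_nonneg:
  assumes pos: "\<forall>i<m. \<forall>j<n. 0 < p i j" and J: "J < n"
  shows "0 \<le> - ln (log_pool m n p u J)"
proof -
  define S where "S = (\<Sum>l'<n. exp (Zf m p u l'))"
  have Sp: "0 < S" unfolding S_def using S_pos[OF J] .
  have "exp (Zf m p u J) \<le> S" unfolding S_def
    using J by (intro member_le_sum) auto
  then have "Zf m p u J \<le> ln S" using Sp by (metis exp_le_cancel_iff exp_ln)
  then show ?thesis using loss_eq[OF pos J, of u] unfolding S_def by simp
qed



definition breg :: "real \<Rightarrow> real \<Rightarrow> real \<Rightarrow> real" where
  "breg a u w = - (u powr a) / a + (w powr a) / a + (w powr (a - 1)) * (u - w)"

lemma breg_nonneg:
  fixes a u w :: real
  assumes "0 < a" "a < 1" "0 \<le> u" "0 < w"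
  shows "0 \<le> breg a u w"
proof -
  define x where "x = w powr (a - 1)"
  have xp: "0 < x" using assms by (simp add: x_def)
  have "(u/w) powr a \<le> 1 + a * (u/w - 1)" using assms by (intro bern_concave) auto
  then have "u powr a / w powr a \<le> 1 + a * (u/w - 1)" by (simp add: powr_divide)
  moreover have wa: "w powr a = w * x" unfolding x_def by (rule SD[OF assms(4)])
  ultimately have "u powr a / (w * x) \<le> 1 + a * (u/w - 1)" by simp
  moreover have wxp: "0 < w * x" using assms xp by simp
  ultimately have "u powr a \<le> (1 + a * (u/w - 1)) * (w * x)" by (simp add: pos_divide_le_eq)
  then have "u powr a \<le> (w * x) * (1 + a * (u/w - 1))" by (simp add: mult.commute)
  also have "\<dots> = w * x + a * x * (u - w)" using assms by (simp add: field_simps)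
  finally have "u powr a \<le> w * x + a * x * (u - w)" .
  then have "0 \<le> (- (u powr a) + w powr a) / a + x * (u - w)" using assms wa
    by (simp add: field_simps)
  then show ?thesis unfolding breg_def x_def by (simp add: add_divide_distrib diff_divide_distrib)
qed

lemma three_point:
  fixes a u w w' :: real
  assumes "0 < a" "a < 1" "0 < w" "0 < w'"
  shows "(w' powr (a-1) - w powr (a-1)) * (w' - u) \<le> breg a u w - breg a u w'"
proof -
  have "0 \<le> breg a w' w" using assms by (intro breg_nonneg) auto
  moreover have "breg a u w - breg a u w' - (w' powr (a-1) - w powr (a-1)) * (w' - u) = breg a w' w"
    unfolding breg_def by (simp add: algebra_simps)
  ultimately show ?thesis by linarith
qed

lemma qbound:
  fixes a lam D w w' :: real
  assumes a: "0 < a" "a < 1/2" and w: "0 < w" "w \<le> 1" and w': "0 < w'" "w' \<le> 1"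
    and lam: "0 \<le> lam" and D: "0 \<le> D"
    and up: "w' powr (a-1) - w powr (a-1) \<le> D"
    and lo: "- (lam * (1 + 1/w)) \<le> w' powr (a-1) - w powr (a-1)"
    and r: "(29/30) * w powr (a-1) \<le> w' powr (a-1)"
  shows "(w' powr (a-1) - w powr (a-1)) * (w - w') \<le> (1/(1-a)) * D^2 * w
     + 2 * lam * (11/10) * (ln w' - ln w) + 2 * lam * (11/10) * (1/(1-a)) * D / w powr (a-1)"
proof -
  define x where "x = w powr (a-1)"
  define x' where "x' = w' powr (a-1)"
  define \<beta> where "\<beta> = 1/(1-a)"
  define \<delta> where "\<delta> = x' - x"
  have x1: "1 \<le> x" unfolding x_def using a w by (intro x_ge1) auto
  have bp: "0 < \<beta>" "\<beta> \<le> 2" using a by (auto simp: \<beta>_def field_simps)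
  have sb: "w - w' \<le> \<beta> * w * \<delta> / x"
    using SB[of w w' a] a w w' by (simp add: x_def x'_def \<beta>_def \<delta>_def)
  have sln: "ln w - ln w' \<le> \<beta> * \<delta> / x"
    using Sln[of w w' a] a w w' by (simp add: x_def x'_def \<beta>_def \<delta>_def)
  have T3: "0 \<le> 2 * lam * (11/10) * \<beta> * D / x" using lam D bp x1 by simp
  have main: "\<delta> * (w - w') \<le> \<beta> * D^2 * w
     + 2 * lam * (11/10) * (ln w' - ln w) + 2 * lam * (11/10) * \<beta> * D / x"
  proof (cases "0 \<le> \<delta>")
    case True
    have "\<delta> * (w - w') \<le> \<delta> * (\<beta> * w * \<delta> / x)" using sb True by (rule mult_left_mono)
    also have "\<dots> = \<beta> * w * \<delta>^2 / x" by (simp add: power2_eq_square)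
    also have "\<dots> \<le> \<beta> * w * \<delta>^2 / 1" using x1 bp w True
      by (intro divide_left_mono) auto
    also have "\<dots> = \<beta> * w * \<delta>^2" by simp
    also have "\<dots> \<le> \<beta> * w * D^2" using True up bp w
      by (intro mult_left_mono power_mono) (auto simp: \<delta>_def x_def x'_def)
    finally have A: "\<delta> * (w - w') \<le> \<beta> * D^2 * w" by (simp add: algebra_simps)
    have dD: "\<delta> \<le> D" using up by (simp add: \<delta>_def x_def x'_def)
    have "\<beta> * \<delta> / x \<le> \<beta> * D / x" using dD bp x1
      by (intro divide_right_mono mult_left_mono) auto
    with sln have B: "ln w - ln w' \<le> \<beta> * D / x" by linarith
    have "2 * lam * (11/10) * (ln w - ln w') \<le> 2 * lam * (11/10) * (\<beta> * D / x)"
      using B lam by (intro mult_left_mono) auto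
    moreover have "2 * lam * (11/10) * (ln w' - ln w) = - (2 * lam * (11/10) * (ln w - ln w'))"
      by (metis minus_diff_eq mult_minus_right)
    ultimately have "0 \<le> 2 * lam * (11/10) * (ln w' - ln w) + 2 * lam * (11/10) * (\<beta> * D / x)"
      by linarith
    moreover have "2 * lam * (11/10) * (\<beta> * D / x) = 2 * lam * (11/10) * \<beta> * D / x" by simp
    ultimately show ?thesis using A by linarith
  next
    case False
    have ww: "w \<le> w'"
    proof -
      have "\<beta> * w * \<delta> / x \<le> 0" using False bp w x1
        by (simp add: divide_nonpos_pos mult_nonneg_nonpos)
      then show ?thesis using sb by simp
    qed
    have d1: "- \<delta> \<le> 2 * lam / w"
    proof -
      have "1 \<le> 1 / w" using w by simp
      then have "lam * (1 + 1/w) \<le> lam * (2 / w)" using lam by (intro mult_left_mono) auto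
      moreover have "lam * (2 / w) = 2 * lam / w" by simp
      ultimately show ?thesis using lo unfolding \<delta>_def x_def x'_def by linarith
    qed
    define y where "y = w' / w"
    have y1: "1 \<le> y" using ww w by (simp add: y_def)
    have yF: "y \<le> 11/10" unfolding y_def using SG[of w w' a] a w w' r by simp
    have "\<delta> * (w - w') = (- \<delta>) * (w' - w)" by (simp add: algebra_simps)
    also have "\<dots> \<le> (2 * lam / w) * (w' - w)" using d1 ww by (intro mult_right_mono) auto
    also have "\<dots> = 2 * lam * (y - 1)" using w by (simp add: y_def field_simps)
    also have "\<dots> \<le> 2 * lam * (y * ln y)" using SH[of y] y1 lam by (intro mult_left_mono) auto
    also have "\<dots> \<le> 2 * lam * ((11/10) * ln y)" using y1 yF lam
      by (intro mult_left_mono mult_right_mono) auto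
    also have "ln y = ln w' - ln w" using w w' by (simp add: y_def ln_div)
    finally have A: "\<delta> * (w - w') \<le> 2 * lam * (11/10) * (ln w' - ln w)" by (simp only: mult.assoc)
    have "0 \<le> \<beta> * D^2 * w" using bp w by simp
    with A T3 show ?thesis by linarith
  qed
  then show ?thesis by (simp only: x_def x'_def \<beta>_def \<delta>_def)
qed



lemma inv_x: fixes w a :: real assumes "0 < w" shows "1 / w powr (a-1) = w powr (1-a)"
proof -
  have "1 / w powr (a-1) = w powr 0 / w powr (a-1)" using assms by simp
  also have "\<dots> = w powr (0 - (a-1))" by (simp only: powr_diff)
  finally show ?thesis by simp
qed

lemma w_x: fixes w a :: real assumes "0 < w" shows "w / w powr (a-1) = w powr (2-a)"
proof -
  have "w / w powr (a-1) = w powr 1 / w powr (a-1)" using assms by simp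
  also have "\<dots> = w powr (1 - (a-1))" by (simp only: powr_diff)
  finally show ?thesis by simp
qed

context
  fixes a \<eta> \<gamma> c :: real and m :: nat and w w' g :: "nat \<Rightarrow> real"
  assumes a: "0 < a" "a < 1/2" and m: "1 \<le> m"
   and wpos: "\<forall>i<m. 0 < w i" and wsum: "(\<Sum>i<m. w i) = 1"
   and w'pos: "\<forall>i<m. 0 < w' i" and w'sum: "(\<Sum>i<m. w' i) = 1"
   and eta: "0 < \<eta>" and gam: "0 < \<gamma>"
   and g: "\<forall>i<m. - \<gamma> / w i \<le> g i \<and> g i \<le> \<gamma>"
   and upd: "\<forall>i<m. - (w' i powr (a-1)) = - (w i powr (a-1)) - \<eta> * g i + c"
   and reg: "\<forall>i<m. \<eta> * \<gamma> * (1 + 1 / w i) \<le> (1/30) * w i powr (a-1)"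
begin

lemma st_w_le1: "i < m \<Longrightarrow> w i \<le> 1"
  using member_le_sum[of i "{..<m}" w] wpos wsum by (simp add: less_imp_le)

lemma st_w'_le1: "i < m \<Longrightarrow> w' i \<le> 1"
  using member_le_sum[of i "{..<m}" w'] w'pos w'sum by (simp add: less_imp_le)

lemma st_delta: "i < m \<Longrightarrow> w' i powr (a-1) - w i powr (a-1) = \<eta> * g i - c"
  using upd by force

lemma st_eg_up: "i < m \<Longrightarrow> \<eta> * g i \<le> \<eta> * \<gamma>"
  using g eta by (intro mult_left_mono) auto

lemma st_eg_lo: "i < m \<Longrightarrow> - (\<eta> * \<gamma>) / w i \<le> \<eta> * g i"
proof -
  assume i: "i < m"
  have "\<eta> * (- \<gamma> / w i) \<le> \<eta> * g i" using g eta i by (intro mult_left_mono) auto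
  then show ?thesis by simp
qed

lemma st_c_upper: "c \<le> \<eta> * \<gamma>"
proof (rule ccontr)
  assume "\<not> c \<le> \<eta> * \<gamma>"
  then have cg: "\<eta> * \<gamma> < c" by simp
  have "w i - w' i < 0" if i: "i < m" for i
  proof -
    have d: "w' i powr (a-1) - w i powr (a-1) < 0" using st_delta[OF i] st_eg_up[OF i] cg by simp
    have "w i - w' i \<le> (1/(1-a)) * w i * (w' i powr (a-1) - w i powr (a-1)) / w i powr (a-1)"
      using SB[of "w i" "w' i" a] wpos w'pos i a by simp
    also have "\<dots> < 0" using d wpos i a
      by (intro divide_neg_pos mult_pos_neg) auto
    finally show ?thesis .
  qed
  note neg = this
  have "(\<Sum>i<m. w i - w' i) < (\<Sum>i<m. (0::real))"
  proof (rule sum_strict_mono)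
    show "{..<m} \<noteq> {}" using m by (metis empty_iff lessThan_iff less_le_trans zero_less_one)
  qed (use neg in auto)
  moreover have "(\<Sum>i<m. w i - w' i) = 0" using wsum w'sum by (simp add: sum_subtractf)
  ultimately show False by simp
qed

lemma st_c_lower: "- (\<eta> * \<gamma> * (11/10) * m) \<le> c"
proof (cases "0 \<le> c")
  case True
  have "0 \<le> \<eta> * \<gamma> * (11/10) * m" using eta gam by simp
  with True show ?thesis by linarith
next
  case False
  define lam where "lam = \<eta> * \<gamma>"
  define \<beta> where "\<beta> = 1/(1-a)"
  have bp: "0 < \<beta>" using a by (simp add: \<beta>_def)
  have lamp: "0 < lam" using eta gam by (simp add: lam_def)
  have key: "\<beta> * (w' i powr (2-a)) * (- lam / w i - c) \<le> w i - w' i" if i: "i < m" for i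
  proof -
    have sc: "w' i - w i \<le> \<beta> * w' i * (w i powr (a-1) - w' i powr (a-1)) / w' i powr (a-1)"
      using SB[of "w' i" "w i" a] wpos w'pos i a by (simp add: \<beta>_def)
    have "- lam / w i - c \<le> w' i powr (a-1) - w i powr (a-1)"
      using st_delta[OF i] st_eg_lo[OF i] by (simp add: lam_def)
    then have "\<beta> * (w' i / w' i powr (a-1)) * (- lam / w i - c)
        \<le> \<beta> * (w' i / w' i powr (a-1)) * (w' i powr (a-1) - w i powr (a-1))"
      using bp w'pos i by (intro mult_left_mono) auto
    also have "\<dots> = - (\<beta> * w' i * (w i powr (a-1) - w' i powr (a-1)) / w' i powr (a-1))"
    proof -
      have "0 < w' i" using w'pos i by simp
      then have "w' i powr (a-1) \<noteq> 0" by simp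
      then show ?thesis by (simp add: field_simps)
    qed
    also have "\<dots> \<le> w i - w' i" using sc by simp
    finally show ?thesis using w_x[of "w' i" a] w'pos i by simp
  qed
  have ratio: "w' i / w i \<le> 11/10" if i: "i < m" for i
  proof -
    have "- lam / w i \<le> w' i powr (a-1) - w i powr (a-1)"
      using st_delta[OF i] st_eg_lo[OF i] False by (simp add: lam_def)
    moreover have "lam / w i \<le> (1/30) * w i powr (a-1)"
    proof -
      have "lam / w i \<le> lam * (1 + 1 / w i)" using lamp by (simp add: field_simps)
      moreover have "lam * (1 + 1 / w i) \<le> (1/30) * w i powr (a-1)" using reg i by (simp add: lam_def)
      ultimately show ?thesis by linarith
    qed
    ultimately have "(29/30) * w i powr (a-1) \<le> w' i powr (a-1)" by simp
    then show ?thesis using SG[of "w i" "w' i" a] a wpos w'pos i by simp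
  qed
  have "(\<Sum>i<m. \<beta> * (w' i powr (2-a)) * (- lam / w i - c)) \<le> (\<Sum>i<m. w i - w' i)"
    using key by (intro sum_mono) auto
  also have "(\<Sum>i<m. w i - w' i) = 0" using wsum w'sum by (simp add: sum_subtractf)
  finally have s0: "(\<Sum>i<m. \<beta> * (w' i powr (2-a)) * (- lam / w i - c)) \<le> 0" .
  have "(\<Sum>i<m. \<beta> * (w' i powr (2-a)) * (- lam / w i - c))
      = \<beta> * ((- c) * (\<Sum>i<m. w' i powr (2-a)) - lam * (\<Sum>i<m. w' i powr (2-a) / w i))"
  proof -
    have "(\<Sum>i<m. \<beta> * (w' i powr (2-a)) * (- lam / w i - c))
       = (\<Sum>i<m. (\<beta> * (- c)) * w' i powr (2-a) - (\<beta> * lam) * (w' i powr (2-a) / w i))"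
      by (intro sum.cong) (auto simp: algebra_simps)
    also have "\<dots> = (\<beta> * (- c)) * (\<Sum>i<m. w' i powr (2-a)) - (\<beta> * lam) * (\<Sum>i<m. w' i powr (2-a) / w i)"
      by (simp only: sum_subtractf sum_distrib_left)
    finally show ?thesis by (simp add: algebra_simps)
  qed
  with s0 bp have s1: "(- c) * (\<Sum>i<m. w' i powr (2-a)) \<le> lam * (\<Sum>i<m. w' i powr (2-a) / w i)"
    by (simp add: mult_le_0_iff)
  have s2: "(\<Sum>i<m. w' i powr (2-a) / w i) \<le> (11/10) * real m powr a"
  proof -
    have "(\<Sum>i<m. w' i powr (2-a) / w i) \<le> (\<Sum>i<m. (11/10) * w' i powr (1-a))"
    proof (intro sum_mono)
      fix i assume "i \<in> {..<m}"
      then have i: "i < m" by simp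
      have "w' i powr (2-a) = w' i * w' i powr (1-a)"
      proof -
        have "w' i powr (2-a) = w' i powr (1 + (1-a))" by simp
        also have "\<dots> = w' i powr 1 * w' i powr (1-a)" by (simp only: powr_add)
        moreover have "0 < w' i" using w'pos i by simp
        ultimately show ?thesis by simp
      qed
      then have "w' i powr (2-a) / w i = (w' i / w i) * w' i powr (1-a)" by simp
      also have "\<dots> \<le> (11/10) * w' i powr (1-a)" using ratio[OF i] by (intro mult_right_mono) auto
      finally show "w' i powr (2-a) / w i \<le> (11/10) * w' i powr (1-a)" .
    qed
    also have "\<dots> = (11/10) * (\<Sum>i<m. w' i powr (1-a))" by (simp add: sum_distrib_left)
    also have "\<dots> \<le> (11/10) * real m powr a"
      using pm1[of m w' a] m w'pos w'sum a by (simp add: less_imp_le)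
    finally show ?thesis .
  qed
  have s3: "real m powr (a-1) \<le> (\<Sum>i<m. w' i powr (2-a))"
    using pm2[of m w' a] m w'pos w'sum a by simp
  have mc: "0 < - c" using False by simp
  have "(- c) * real m powr (a-1) \<le> (- c) * (\<Sum>i<m. w' i powr (2-a))"
    using s3 mc by (intro mult_left_mono) auto
  also have "\<dots> \<le> lam * ((11/10) * real m powr a)" using s1 s2 lamp
    by (meson mult_left_mono less_imp_le order_trans)
  finally have s4: "(- c) * real m powr (a-1) \<le> lam * ((11/10) * real m powr a)" .
  have mpos: "0 < real m" using m by simp
  have "real m powr a = real m powr (a-1) * real m"
  proof -
    have "real m powr a = real m powr ((a-1) + 1)" by simp
    also have "\<dots> = real m powr (a-1) * real m powr 1" by (simp only: powr_add)
    finally show ?thesis using mpos by simp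
  qed
  with s4 have "(- c) * real m powr (a-1) \<le> (lam * (11/10) * real m) * real m powr (a-1)"
    by (simp add: algebra_simps)
  moreover have "0 < real m powr (a-1)" using mpos by simp
  ultimately have "- c \<le> lam * (11/10) * real m" by (meson mult_le_cancel_right_pos)
  then show ?thesis by (simp add: lam_def)
qed


lemma st_growth: "i < m \<Longrightarrow> w' i powr (a-1) \<le> w i powr (a-1) + \<eta> * \<gamma> * (1 + (11/10) * m)"
  using st_delta[of i] st_eg_up[of i] st_c_lower by (simp add: algebra_simps)

lemma st_sum:
  fixes u :: "nat \<Rightarrow> real"
  assumes u0: "\<forall>i<m. 0 \<le> u i" and usum: "(\<Sum>i<m. u i) = 1"
  shows "\<eta> * (\<Sum>i<m. g i * (w i - u i)) \<le> (\<Sum>i<m. breg a (u i) (w i)) - (\<Sum>i<m. breg a (u i) (w' i))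
     + (1/(1-a)) * (\<eta> * \<gamma> * (1 + (11/10) * m))^2
     + 2 * (\<eta> * \<gamma>) * (11/10) * (\<Sum>i<m. ln (w' i) - ln (w i))
     + 2 * (\<eta> * \<gamma>) * (11/10) * (1/(1-a)) * (\<eta> * \<gamma> * (1 + (11/10) * m)) * real m powr a"
proof -
  define lam where "lam = \<eta> * \<gamma>"
  define D where "D = lam * (1 + (11/10) * m)"
  define \<delta> where "\<delta> i = w' i powr (a-1) - w i powr (a-1)" for i
  have lamp: "0 < lam" using eta gam by (simp add: lam_def)
  have Dp: "0 \<le> D" using lamp by (simp add: D_def)
  have cu: "c \<le> lam" using st_c_upper by (simp add: lam_def)
  have cl: "- (lam * (11/10) * m) \<le> c" using st_c_lower by (simp add: lam_def)
  have e1: "\<eta> * (\<Sum>i<m. g i * (w i - u i)) = (\<Sum>i<m. \<delta> i * (w i - u i))"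
  proof -
    have "\<eta> * (\<Sum>i<m. g i * (w i - u i)) = (\<Sum>i<m. (\<delta> i + c) * (w i - u i))"
      unfolding sum_distrib_left
      by (intro sum.cong) (auto simp: \<delta>_def st_delta algebra_simps)
    also have "\<dots> = (\<Sum>i<m. \<delta> i * (w i - u i)) + c * ((\<Sum>i<m. w i) - (\<Sum>i<m. u i))"
      by (simp add: algebra_simps sum.distrib sum_subtractf sum_distrib_left)
    finally show ?thesis using wsum usum by simp
  qed
  have per: "\<delta> i * (w i - u i) \<le> (breg a (u i) (w i) - breg a (u i) (w' i))
     + ((1/(1-a)) * D^2 * w i + 2 * lam * (11/10) * (ln (w' i) - ln (w i))
        + 2 * lam * (11/10) * (1/(1-a)) * D * (w i powr (1-a)))" if i: "i < m" for i
  proof -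
    have wi: "0 < w i" "w i \<le> 1" using wpos st_w_le1 i by auto
    have w'i: "0 < w' i" "w' i \<le> 1" using w'pos st_w'_le1 i by auto
    have A: "\<delta> i * (w' i - u i) \<le> breg a (u i) (w i) - breg a (u i) (w' i)"
      unfolding \<delta>_def using three_point[of a "w i" "w' i" "u i"] a wi w'i by simp
    have up: "\<delta> i \<le> D"
      using st_delta[OF i] st_eg_up[OF i] cl by (simp add: \<delta>_def D_def lam_def algebra_simps)
    have lo: "- (lam * (1 + 1 / w i)) \<le> \<delta> i"
    proof -
      have "- lam / w i \<le> \<eta> * g i" using st_eg_lo[OF i] by (simp add: lam_def)
      then show ?thesis using st_delta[OF i] cu by (simp add: \<delta>_def algebra_simps)
    qed
    have r: "(29/30) * w i powr (a-1) \<le> w' i powr (a-1)"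
    proof -
      have "lam * (1 + 1 / w i) \<le> (1/30) * w i powr (a-1)" using reg i by (simp add: lam_def)
      with lo show ?thesis by (simp add: \<delta>_def)
    qed
    have B: "\<delta> i * (w i - w' i) \<le> (1/(1-a)) * D^2 * w i + 2 * lam * (11/10) * (ln (w' i) - ln (w i))
        + 2 * lam * (11/10) * (1/(1-a)) * D / w i powr (a-1)"
      unfolding \<delta>_def using qbound[of a "w i" "w' i" lam D] a wi w'i lamp Dp up lo r
      by (simp add: \<delta>_def)
    have "2 * lam * (11/10) * (1/(1-a)) * D / w i powr (a-1) = 2 * lam * (11/10) * (1/(1-a)) * D * (1 / w i powr (a-1))"
      by simp
    also have "\<dots> = 2 * lam * (11/10) * (1/(1-a)) * D * (w i powr (1-a))" using inv_x[of "w i" a] wi by simp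
    finally have C: "2 * lam * (11/10) * (1/(1-a)) * D / w i powr (a-1) = 2 * lam * (11/10) * (1/(1-a)) * D * (w i powr (1-a))" .
    have "\<delta> i * (w i - u i) = \<delta> i * (w' i - u i) + \<delta> i * (w i - w' i)" by (simp add: algebra_simps)
    with A B C show ?thesis by linarith
  qed
  have "(\<Sum>i<m. \<delta> i * (w i - u i)) \<le> (\<Sum>i<m. (breg a (u i) (w i) - breg a (u i) (w' i))
     + ((1/(1-a)) * D^2 * w i + 2 * lam * (11/10) * (ln (w' i) - ln (w i))
        + 2 * lam * (11/10) * (1/(1-a)) * D * (w i powr (1-a))))"
    using per by (intro sum_mono) auto
  also have "\<dots> = ((\<Sum>i<m. breg a (u i) (w i)) - (\<Sum>i<m. breg a (u i) (w' i)))
     + ((1/(1-a)) * D^2 * (\<Sum>i<m. w i) + 2 * lam * (11/10) * (\<Sum>i<m. ln (w' i) - ln (w i))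
        + 2 * lam * (11/10) * (1/(1-a)) * D * (\<Sum>i<m. w i powr (1-a)))"
  proof -
    have q1: "(\<Sum>i<m. (breg a (u i) (w i) - breg a (u i) (w' i))
     + ((1/(1-a)) * D^2 * w i + 2 * lam * (11/10) * (ln (w' i) - ln (w i))
        + 2 * lam * (11/10) * (1/(1-a)) * D * (w i powr (1-a))))
     = (\<Sum>i<m. breg a (u i) (w i) - breg a (u i) (w' i))
     + ((\<Sum>i<m. (1/(1-a)) * D^2 * w i) + (\<Sum>i<m. 2 * lam * (11/10) * (ln (w' i) - ln (w i)))
        + (\<Sum>i<m. 2 * lam * (11/10) * (1/(1-a)) * D * (w i powr (1-a))))"
      by (simp only: sum.distrib)
    have q2: "(\<Sum>i<m. breg a (u i) (w i) - breg a (u i) (w' i)) = (\<Sum>i<m. breg a (u i) (w i)) - (\<Sum>i<m. breg a (u i) (w' i))"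
      by (rule sum_subtractf)
    have q3: "(\<Sum>i<m. (1/(1-a)) * D^2 * w i) = (1/(1-a)) * D^2 * (\<Sum>i<m. w i)"
      by (rule sum_distrib_left[symmetric])
    have q4: "(\<Sum>i<m. 2 * lam * (11/10) * (ln (w' i) - ln (w i))) = 2 * lam * (11/10) * (\<Sum>i<m. ln (w' i) - ln (w i))"
      by (rule sum_distrib_left[symmetric])
    have q5: "(\<Sum>i<m. 2 * lam * (11/10) * (1/(1-a)) * D * (w i powr (1-a))) = 2 * lam * (11/10) * (1/(1-a)) * D * (\<Sum>i<m. w i powr (1-a))"
      by (rule sum_distrib_left[symmetric])
    show ?thesis using q1 q2 q3 q4 q5 by linarith
  qed
  also have "\<dots> \<le> ((\<Sum>i<m. breg a (u i) (w i)) - (\<Sum>i<m. breg a (u i) (w' i)))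
     + ((1/(1-a)) * D^2 * 1 + 2 * lam * (11/10) * (\<Sum>i<m. ln (w' i) - ln (w i))
        + 2 * lam * (11/10) * (1/(1-a)) * D * real m powr a)"
  proof -
    have "(\<Sum>i<m. w i powr (1-a)) \<le> real m powr a"
      using pm1[of m w a] m wpos wsum a by (simp add: less_imp_le)
    moreover have "0 \<le> 2 * lam * (11/10) * (1/(1-a)) * D" using lamp Dp a by simp
    ultimately have "2 * lam * (11/10) * (1/(1-a)) * D * (\<Sum>i<m. w i powr (1-a))
       \<le> 2 * lam * (11/10) * (1/(1-a)) * D * real m powr a" by (rule mult_left_mono)
    then show ?thesis using wsum by simp
  qed
  finally show ?thesis using e1 unfolding lam_def D_def by simp
qed

end



lemma reg_lemma:
  fixes a w X lam :: real
  assumes a: "0 < a" "a < 1/2" and w: "0 < w" "w \<le> 1"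
    and xX: "w powr (a-1) \<le> X" and lam: "0 \<le> lam"
    and C: "lam * (1 + X powr (a/(1-a))) \<le> 1/30"
  shows "lam * (1 + 1 / w) \<le> (1/30) * w powr (a-1)" and "lam \<le> w powr a"
proof -
  define x where "x = w powr (a-1)"
  define b where "b = a/(1-a)"
  have x1: "1 \<le> x" unfolding x_def using a w by (intro x_ge1) auto
  have b0: "0 \<le> b" using a by (simp add: b_def)
  have xb: "x powr b \<le> X powr b" using x1 xX b0 by (intro powr_mono2) (auto simp: x_def)
  have xb1: "1 \<le> x powr b" using x1 b0 by (rule ge_one_powr_ge_zero)
  have iw: "1 / w = x * x powr b"
  proof -
    have "1 / w = x powr (1/(1-a))" unfolding x_def using Sinv[of w a] w a by simp
    also have "1/(1-a) = 1 + b" using a by (simp add: b_def field_simps)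
    also have "x powr (1 + b) = x * x powr b" using x1 by (simp add: powr_add)
    finally show ?thesis .
  qed
  have "lam * (1 + 1 / w) = lam * (1 + x * x powr b)" by (simp add: iw)
  also have "\<dots> \<le> lam * (x + x * X powr b)" using lam x1 xb
    by (intro mult_left_mono add_mono mult_left_mono) auto
  also have "\<dots> = x * (lam * (1 + X powr b))" by (simp add: algebra_simps)
  also have "\<dots> \<le> x * (1/30)" using C x1 by (intro mult_left_mono) (auto simp: b_def)
  finally show "lam * (1 + 1 / w) \<le> (1/30) * w powr (a-1)" by (simp add: x_def mult.commute)
  have wa: "w powr a = 1 / x powr b"
  proof -
    have "w powr a = x powr (1 - 1/(1-a))" unfolding x_def using Swa[of w a] w a by simp
    also have "1 - 1/(1-a) = - b" using a by (simp add: b_def field_simps)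
    also have "x powr (- b) = 1 / x powr b" by (simp add: powr_minus divide_inverse)
    finally show ?thesis .
  qed
  have Xb: "0 < X powr b" using xb xb1 by linarith
  have "lam * X powr b \<le> 1" using C lam Xb unfolding b_def by (simp add: algebra_simps)
  then have "lam \<le> 1 / X powr b" using Xb by (simp add: field_simps)
  also have "\<dots> \<le> 1 / x powr b"
  proof -
    have pp: "0 < X powr b * x powr b" using Xb xb1 by (intro mult_pos_pos) linarith+
    show ?thesis by (rule divide_left_mono[OF xb _ pp]) simp
  qed
  finally show "lam \<le> w powr a" using wa by simp
qed

lemma cand_eq:
  assumes "1 \<le> m" "\<forall>i<m. eta0 a m n T \<le> w t i powr a"
  shows "eta_cand a m n T w t = eta0 a m n T"
proof -
  have ne: "{..<m} \<noteq> {}" using assms(1) by (metis empty_iff lessThan_iff less_le_trans zero_less_one)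
  have "eta0 a m n T \<le> Min ((\<lambda>i. w t i powr a) ` {..<m})"
    using assms(2) ne by (subst Min_ge_iff) auto
  then show ?thesis unfolding eta_cand_def by simp
qed

lemma etat_eq:
  assumes "1 \<le> t" "\<forall>s\<in>{1..t}. eta_cand a m n T w s = e"
  shows "eta_t a m n T w t = e"
proof -
  have "eta_cand a m n T w ` {1..t} = {e}" using assms by auto
  then show ?thesis unfolding eta_t_def by simp
qed



lemma run_bound:
  fixes a :: real and m n T :: nat and P J w
  assumes a: "0 < a" "a < 1/2" and m: "1 \<le> m" and n: "1 \<le> n" and T3: "3 \<le> T"
    and run: "alg1_run a m n T P J w" and sg: "small_gradient m n T P J w"
    and C1: "(1 / sqrt T) * (1 + (4 * m * sqrt T) powr (a/(1-a))) \<le> 1/30"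
    and C2: "(1 / sqrt T) * ((11/5) * m * ln m + 2) \<le> 2"
  shows "regret m n T P J w \<le> (240 + 12/a) * real m powr ((3-a)/2) * real n * sqrt T * ln T"
proof -
  define \<eta> where "\<eta> = eta0 a m n T"
  define \<gamma> where "\<gamma> = 12 * real n * ln T"
  define lam where "lam = \<eta> * \<gamma>"
  define M where "M = real m powr ((1+a)/2)"
  define D where "D = lam * (1 + (11/10)*m)"
  define X where "X = real m powr (1-a) + T * D"
  define b where "b = a/(1-a)"
  have mpos: "0 < real m" using m by simp
  have lnT: "1 \<le> ln (real T)"
  proof -
    have "exp 1 \<le> real T" using exp_le T3 by linarith
    then have "ln (exp 1) \<le> ln (real T)" by (intro ln_mono) auto
    then show ?thesis by simp
  qed
  have gam: "12 \<le> \<gamma>"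
  proof -
    have "12 * 1 * 1 \<le> 12 * real n * ln T" using n lnT by (intro mult_mono) auto
    then show ?thesis by (simp add: \<gamma>_def)
  qed
  have M1: "1 \<le> M" unfolding M_def using m a by (intro ge_one_powr_ge_zero) auto
  have sT: "1 \<le> sqrt T" using T3 by simp
  have eta_def': "\<eta> = 1 / (sqrt T * ln T) * (1 / (12 * M * real n))"
    by (simp add: \<eta>_def eta0_def M_def)
  have etap: "0 < \<eta>"
  proof -
    have "0 < sqrt T * ln T * (12 * M * real n)" using M1 sT lnT n T3 by (intro mult_pos_pos) auto
    then show ?thesis unfolding eta_def' by simp
  qed
  have lam_eq: "lam = 1 / (sqrt T * M)"
    using lnT n M1 sT T3 unfolding lam_def eta_def' \<gamma>_def by (simp add: field_simps)
  have lamp: "0 < lam" using lam_eq M1 sT by simp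
  have lam_le: "lam \<le> 1 / sqrt T"
  proof -
    have "1 / (sqrt T * M) \<le> 1 / (sqrt T * 1)" using M1 sT
      by (intro divide_left_mono mult_left_mono mult_pos_pos) auto
    then show ?thesis using lam_eq by simp
  qed
  have eta_le: "\<eta> \<le> lam" using etap gam unfolding lam_def
    by (metis less_eq_real_def mult.right_neutral mult_left_mono order_trans one_le_numeral)
  have Dp: "0 \<le> D" using lamp by (simp add: D_def)
  have X_le: "X \<le> 4 * m * sqrt T"
  proof -
    have "real m powr (1-a) \<le> real m powr 1" using m a by (intro powr_mono) auto
    then have a1: "real m powr (1-a) \<le> m" using mpos by simp
    have TT: "real T = sqrt T * sqrt T" by simp
    have "T * D = (real T / sqrt T) * ((1 + (11/10)*m) / M)" unfolding D_def lam_eq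
      by (simp add: field_simps)
    also have "real T / sqrt T = sqrt T" by (rule real_div_sqrt) simp
    finally have "T * D = sqrt T * (1 + (11/10)*m) / M" by simp
    also have "\<dots> \<le> sqrt T * (1 + (11/10)*m) / 1" using M1 sT m
      by (intro divide_left_mono) auto
    also have "\<dots> = sqrt T * (1 + (11/10)*m)" by simp
    also have "\<dots> \<le> sqrt T * ((21/10) * m)" using m sT by (intro mult_left_mono) auto
    finally have "T * D \<le> sqrt T * ((21/10) * m)" .
    moreover have "sqrt T * ((21/10) * m) = (21/10) * (real m * sqrt T)" by simp
    moreover have "real m \<le> real m * sqrt T" using m sT by simp
    moreover have "real (4 * m) * sqrt T = 4 * (real m * sqrt T)" by simp
    ultimately show ?thesis using a1 unfolding X_def by linarith
  qed
  have X0: "0 \<le> X" unfolding X_def using Dp by simp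
  have Cl: "lam * (1 + X powr b) \<le> 1/30"
  proof -
    have "X powr b \<le> (4 * m * sqrt T) powr b" using X_le X0 a by (intro powr_mono2) (auto simp: b_def)
    then have "lam * (1 + X powr b) \<le> (1 / sqrt T) * (1 + (4 * m * sqrt T) powr b)"
      using lam_le lamp by (intro mult_mono) auto
    then show ?thesis using C1 unfolding b_def by linarith
  qed
  have rP: "\<And>t. t \<in> {1..T} \<Longrightarrow> (\<forall>i<m. \<forall>j<n. 0 < P t i j) \<and> J t < n"
    using run unfolding alg1_run_def by blast
  have rw: "\<And>t. t \<in> {1..T} \<Longrightarrow> (\<forall>i<m. 0 < w t i) \<and> (\<Sum>i<m. w t i) = 1"
    using run unfolding alg1_run_def prob_simplex_def by blast
  have rw1: "\<And>i. i < m \<Longrightarrow> w 1 i = 1 / real m"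
    using run unfolding alg1_run_def by blast
  have rupd: "\<And>t. t \<in> {1..<T} \<Longrightarrow> \<exists>c. \<forall>i<m. - (w (t + 1) i powr (a - 1)) =
          - (w t i powr (a - 1)) - eta_t a m n T w t * grad m n P J t (w t) i + c"
    using run unfolding alg1_run_def by blast
  have rg: "\<And>t. t \<in> {1..T} \<Longrightarrow> \<forall>i<m. - \<gamma> / w t i \<le> grad m n P J t (w t) i \<and> grad m n P J t (w t) i \<le> \<gamma>"
    using sg unfolding small_gradient_def \<gamma>_def by blast
  have wle1: "\<And>t i. t \<in> {1..T} \<Longrightarrow> i < m \<Longrightarrow> w t i \<le> 1"
  proof -
    fix t i assume t: "t \<in> {1..T}" and i: "i < m"
    show "w t i \<le> 1" using member_le_sum[of i "{..<m}" "w t"] rw[OF t] i by (simp add: less_imp_le)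
  qed
  have good: "(\<forall>i<m. lam * (1 + 1 / w s i) \<le> (1/30) * w s i powr (a-1)) \<and> eta_cand a m n T w s = \<eta>"
    if s: "s \<in> {1..T}" and xs: "\<forall>i<m. w s i powr (a-1) \<le> X" for s
  proof -
    have R: "lam * (1 + 1 / w s i) \<le> (1/30) * w s i powr (a-1) \<and> lam \<le> w s i powr a" if i: "i < m" for i
      using reg_lemma[of a "w s i" X lam] a rw[OF s] wle1[OF s i] xs i lamp Cl by (auto simp: b_def)
    have "\<forall>i<m. eta0 a m n T \<le> w s i powr a"
    proof (intro allI impI)
      fix i assume "i < m"
      then have "lam \<le> w s i powr a" using R by blast
      then show "eta0 a m n T \<le> w s i powr a" using eta_le unfolding \<eta>_def by linarith
    qed
    then have "eta_cand a m n T w s = \<eta>" unfolding \<eta>_def using m by (intro cand_eq)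
    with R show ?thesis by blast
  qed
  have gamp: "0 < \<gamma>" using gam by simp
  have invx: "\<forall>i<m. w s i powr (a-1) \<le> X"
    if s: "s \<in> {1..T}" and h: "\<forall>i<m. w s i powr (a-1) \<le> real m powr (1-a) + (real s - 1) * D" for s
  proof (intro allI impI)
    fix i assume i: "i < m"
    have "(real s - 1) * D \<le> T * D" using s Dp by (intro mult_right_mono) auto
    then show "w s i powr (a-1) \<le> X" using h i unfolding X_def by fastforce
  qed
  have step_data: "\<exists>c. \<forall>i<m. - (w (Suc t) i powr (a - 1)) = - (w t i powr (a - 1)) - \<eta> * grad m n P J t (w t) i + c"
    if t: "1 \<le> t" "Suc t \<le> T" and h: "\<forall>s\<in>{1..t}. \<forall>i<m. w s i powr (a-1) \<le> X" for t
  proof -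
    have "\<forall>s\<in>{1..t}. eta_cand a m n T w s = \<eta>" using good h t by auto
    then have "eta_t a m n T w t = \<eta>" using t by (intro etat_eq) auto
    then show ?thesis using rupd[of t] t by simp
  qed
  have inv: "t \<le> T \<longrightarrow> (\<forall>s\<in>{1..t}. \<forall>i<m. w s i powr (a-1) \<le> real m powr (1-a) + (real s - 1) * D)"
    if t1: "1 \<le> t" for t
    using t1
  proof (induction t rule: nat_induct_at_least)
    case base
    show ?case
    proof (intro impI ballI allI)
      fix s i :: nat assume "s \<in> {1..1}" and i: "i < m"
      then have s1: "s = 1" by (meson atLeastAtMost_iff le_antisym)
      have "w s i powr (a-1) = (1 / real m) powr (a-1)" using rw1[OF i] s1 by simp
      also have "\<dots> = 1 / real m powr (a-1)" by (simp add: powr_divide)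
      also have "\<dots> = real m powr (1-a)" using inv_x[of "real m" a] mpos by simp
      finally show "w s i powr (a-1) \<le> real m powr (1-a) + (real s - 1) * D" using s1 by simp
    qed
  next
    case (Suc t)
    show ?case
    proof (intro impI)
      assume tT: "Suc t \<le> T"
      have IH: "\<forall>s\<in>{1..t}. \<forall>i<m. w s i powr (a-1) \<le> real m powr (1-a) + (real s - 1) * D"
        using Suc tT by simp
      have IHX: "\<forall>s\<in>{1..t}. \<forall>i<m. w s i powr (a-1) \<le> X"
        using IH invx tT by auto
      obtain c where c: "\<forall>i<m. - (w (Suc t) i powr (a - 1)) = - (w t i powr (a - 1)) - \<eta> * grad m n P J t (w t) i + c"
        using step_data[OF Suc(1) tT IHX] by blast
      have tm: "t \<in> {1..T}" "Suc t \<in> {1..T}" using Suc(1) tT by auto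
      have regt: "\<forall>i<m. \<eta> * \<gamma> * (1 + 1 / w t i) \<le> (1/30) * w t i powr (a-1)"
        using good[OF tm(1)] IHX Suc(1) unfolding lam_def by auto
      have wp: "\<forall>i<m. 0 < w t i" "(\<Sum>i<m. w t i) = 1" using rw[OF tm(1)] by auto
      have w'p: "\<forall>i<m. 0 < w (Suc t) i" "(\<Sum>i<m. w (Suc t) i) = 1" using rw[OF tm(2)] by auto
      have gt: "\<forall>i<m. - \<gamma> / w t i \<le> grad m n P J t (w t) i \<and> grad m n P J t (w t) i \<le> \<gamma>"
        using rg[OF tm(1)] .
      show "\<forall>s\<in>{1..Suc t}. \<forall>i<m. w s i powr (a-1) \<le> real m powr (1-a) + (real s - 1) * D"
      proof (intro ballI allI impI)
        fix s i :: nat assume s: "s \<in> {1..Suc t}" and i: "i < m"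
        show "w s i powr (a-1) \<le> real m powr (1-a) + (real s - 1) * D"
        proof (cases "s = Suc t")
          case False
          then have "s \<in> {1..t}" using s by auto
          then show ?thesis using IH i by blast
        next
          case True
          have gr: "w (Suc t) i powr (a-1) \<le> w t i powr (a-1) + \<eta> * \<gamma> * (1 + (11/10) * m)"
            by (rule st_growth[OF a(1) a(2) m wp(1) wp(2) w'p(1) w'p(2) etap gamp gt c regt i])
          have "w t i powr (a-1) \<le> real m powr (1-a) + (real t - 1) * D"
            using IH i Suc(1) by auto
          moreover have "\<eta> * \<gamma> * (1 + (11/10) * m) = D" unfolding D_def lam_def ..
          moreover have "(real t - 1) * D + D = (real (Suc t) - 1) * D" by (simp add: algebra_simps)
          ultimately show ?thesis using gr unfolding True by linarith
        qed
      qed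
    qed
  qed
  have invT: "\<forall>s\<in>{1..T}. \<forall>i<m. w s i powr (a-1) \<le> X"
    using inv[of T] invx T3 by auto
  have allgood: "\<And>s. s \<in> {1..T} \<Longrightarrow> (\<forall>i<m. lam * (1 + 1 / w s i) \<le> (1/30) * w s i powr (a-1)) \<and> eta_cand a m n T w s = \<eta>"
    using good invT by blast
  define B where "B u t = (\<Sum>i<m. breg a (u i) (w t i))" for u :: "nat \<Rightarrow> real" and t
  define \<Psi> where "\<Psi> t = (\<Sum>i<m. ln (w t i))" for t
  define \<beta> where "\<beta> = 1/(1-a)"
  define K where "K = \<beta> * D^2 + 2 * lam * (11/10) * \<beta> * D * real m powr a"
  have stp: "\<eta> * (loss m n P J t (w t) - loss m n P J t u) \<le> B u t - B u (Suc t) + K + 2 * lam * (11/10) * (\<Psi> (Suc t) - \<Psi> t)"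
    if t: "t \<in> {1..<T}" and u: "u \<in> prob_simplex m" for t u
  proof -
    have tm: "t \<in> {1..T}" "Suc t \<in> {1..T}" using t by auto
    have t1: "1 \<le> t" "Suc t \<le> T" using t by auto
    have u0: "\<forall>i<m. 0 \<le> u i" and usum: "(\<Sum>i<m. u i) = 1" using u unfolding prob_simplex_def by auto
    have IHX: "\<forall>s\<in>{1..t}. \<forall>i<m. w s i powr (a-1) \<le> X" using invT t1 by auto
    obtain c where c: "\<forall>i<m. - (w (Suc t) i powr (a - 1)) = - (w t i powr (a - 1)) - \<eta> * grad m n P J t (w t) i + c"
      using step_data[OF t1 IHX] by blast
    have regt: "\<forall>i<m. \<eta> * \<gamma> * (1 + 1 / w t i) \<le> (1/30) * w t i powr (a-1)"
      using allgood[OF tm(1)] unfolding lam_def by auto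
    have wp: "\<forall>i<m. 0 < w t i" "(\<Sum>i<m. w t i) = 1" using rw[OF tm(1)] by auto
    have w'p: "\<forall>i<m. 0 < w (Suc t) i" "(\<Sum>i<m. w (Suc t) i) = 1" using rw[OF tm(2)] by auto
    have gt: "\<forall>i<m. - \<gamma> / w t i \<le> grad m n P J t (w t) i \<and> grad m n P J t (w t) i \<le> \<gamma>"
      using rg[OF tm(1)] .
    have S: "\<eta> * (\<Sum>i<m. grad m n P J t (w t) i * (w t i - u i)) \<le> (\<Sum>i<m. breg a (u i) (w t i)) - (\<Sum>i<m. breg a (u i) (w (Suc t) i))
     + (1/(1-a)) * (\<eta> * \<gamma> * (1 + (11/10) * m))^2
     + 2 * (\<eta> * \<gamma>) * (11/10) * (\<Sum>i<m. ln (w (Suc t) i) - ln (w t i))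
     + 2 * (\<eta> * \<gamma>) * (11/10) * (1/(1-a)) * (\<eta> * \<gamma> * (1 + (11/10) * m)) * real m powr a"
      by (rule st_sum[OF a(1) a(2) m wp(1) wp(2) w'p(1) w'p(2) etap gamp gt c regt u0 usum])
    have pt: "\<forall>i<m. \<forall>j<n. 0 < P t i j" "J t < n" using rP[OF tm(1)] by auto
    have tg: "- ln (log_pool m n (P t) (w t) (J t)) + (\<Sum>i<m. (u i - w t i) *
            ((\<Sum>l<n. log_pool m n (P t) (w t) l * ln (P t i l)) - ln (P t i (J t))))
         \<le> - ln (log_pool m n (P t) u (J t))"
      by (rule tangent[OF pt])
    have "(\<Sum>i<m. (u i - w t i) * ((\<Sum>l<n. log_pool m n (P t) (w t) l * ln (P t i l)) - ln (P t i (J t))))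
        = - (\<Sum>i<m. grad m n P J t (w t) i * (w t i - u i))"
      unfolding grad_def by (simp add: sum_negf[symmetric] algebra_simps)
    with tg have L: "loss m n P J t (w t) - loss m n P J t u \<le> (\<Sum>i<m. grad m n P J t (w t) i * (w t i - u i))"
      unfolding loss_def by linarith
    have "\<eta> * (loss m n P J t (w t) - loss m n P J t u) \<le> \<eta> * (\<Sum>i<m. grad m n P J t (w t) i * (w t i - u i))"
      using L etap by (intro mult_left_mono) auto
    also note S
    also have "(\<Sum>i<m. ln (w (Suc t) i) - ln (w t i)) = \<Psi> (Suc t) - \<Psi> t"
      unfolding \<Psi>_def by (simp add: sum_subtractf)
    finally show ?thesis unfolding B_def K_def lam_def D_def \<beta>_def by simp
  qed
  have T1: "1 \<le> T" using T3 by simp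
  have tele: "\<eta> * ((\<Sum>t=1..<T. loss m n P J t (w t)) - (\<Sum>t=1..<T. loss m n P J t u))
      \<le> (B u 1 - B u T) + real (T - 1) * K + 2 * lam * (11/10) * (\<Psi> T - \<Psi> 1)"
    if u: "u \<in> prob_simplex m" for u
  proof -
    have "\<eta> * ((\<Sum>t=1..<T. loss m n P J t (w t)) - (\<Sum>t=1..<T. loss m n P J t u))
        = (\<Sum>t=1..<T. \<eta> * (loss m n P J t (w t) - loss m n P J t u))"
      by (simp only: sum_distrib_left sum_subtractf right_diff_distrib)
    also have "\<dots> \<le> (\<Sum>t=1..<T. (B u t - B u (Suc t)) + K + 2 * lam * (11/10) * (\<Psi> (Suc t) - \<Psi> t))"
      using stp[OF _ u] by (intro sum_mono) auto
    also have "\<dots> = (\<Sum>t=1..<T. B u t - B u (Suc t)) + (\<Sum>t=1..<T. K) + 2 * lam * (11/10) * (\<Sum>t=1..<T. \<Psi> (Suc t) - \<Psi> t)"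
      by (simp add: sum.distrib sum_distrib_left)
    also have "(\<Sum>t=1..<T. B u t - B u (Suc t)) = B u 1 - B u T"
    proof -
      have "(\<Sum>t=1..<T. B u t - B u (Suc t)) = - (\<Sum>t=1..<T. B u (Suc t) - B u t)"
        by (simp add: sum_negf[symmetric])
      also have "\<dots> = B u 1 - B u T" using sum_Suc_diff'[OF T1, of "B u"] by simp
      finally show ?thesis .
    qed
    also have "(\<Sum>t=1..<T. \<Psi> (Suc t) - \<Psi> t) = \<Psi> T - \<Psi> 1" using sum_Suc_diff'[OF T1, of \<Psi>] by simp
    also have "(\<Sum>t=1..<T. K) = real (T - 1) * K" by simp
    finally show ?thesis .
  qed
  have BT: "0 \<le> B u T" if u: "u \<in> prob_simplex m" for u
    unfolding B_def using u rw[of T] T1 a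
    by (intro sum_nonneg breg_nonneg) (auto simp: prob_simplex_def)
  have B1: "B u 1 \<le> (real m powr (1-a) - 1) / a" if u: "u \<in> prob_simplex m" for u
  proof -
    have u0: "\<forall>i<m. 0 \<le> u i" and usum: "(\<Sum>i<m. u i) = 1" using u unfolding prob_simplex_def by auto
    have ule: "u i \<le> 1" if "i < m" for i using member_le_sum[of i "{..<m}" u] u0 usum that by simp
    have "B u 1 = (\<Sum>i<m. - (u i powr a) / a + ((1/real m) powr a) / a + ((1/real m) powr (a - 1)) * (u i - 1/real m))"
      unfolding B_def breg_def using rw1 by (intro sum.cong) auto
    also have "\<dots> = - (\<Sum>i<m. u i powr a) / a + real m * ((1/real m) powr a) / a + ((1/real m) powr (a - 1)) * ((\<Sum>i<m. u i) - real m * (1 / real m))"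
      by (simp add: sum.distrib sum_subtractf sum_divide_distrib[symmetric] sum_distrib_left[symmetric] sum_negf)
    also have "(\<Sum>i<m. u i) - real m * (1 / real m) = 0" using usum mpos by simp
    also have "real m * ((1/real m) powr a) = real m powr (1-a)"
    proof -
      have "real m * ((1/real m) powr a) = real m powr 1 / real m powr a" using mpos by (simp add: powr_divide)
      also have "\<dots> = real m powr (1-a)" by (simp only: powr_diff)
      finally show ?thesis .
    qed
    also have "1 \<le> (\<Sum>i<m. u i powr a)"
    proof -
      have "(\<Sum>i<m. u i) \<le> (\<Sum>i<m. u i powr a)"
      proof (intro sum_mono)
        fix i assume "i \<in> {..<m}"
        then have i: "i < m" by simp
        have "u i powr 1 \<le> u i powr a" using a u0 ule[OF i] i by (intro powr_mono') auto
        then show "u i \<le> u i powr a" using u0 i by simp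
      qed
      then show ?thesis using usum by simp
    qed
    then have "- (\<Sum>i<m. u i powr a) / a \<le> - 1 / a" using a by (simp add: divide_right_mono)
    ultimately show ?thesis by (simp add: diff_divide_distrib)
  qed
  have PsiT: "\<Psi> T \<le> 0"
    unfolding \<Psi>_def using rw[of T] wle1[of T] T1 by (intro sum_nonpos) auto
  have Psi1: "\<Psi> 1 = - (real m * ln (real m))"
    unfolding \<Psi>_def using rw1 mpos by (simp add: ln_div)
  have lastT: "\<eta> * (loss m n P J T (w T) - loss m n P J T u) \<le> \<eta> * (\<gamma> + real n)"
    if u: "u \<in> prob_simplex m" for u
  proof -
    have tm: "T \<in> {1..T}" using T1 by simp
    have pt: "\<forall>i<m. \<forall>j<n. 0 < P T i j" "J T < n" using rP[OF tm] by auto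
    have "loss m n P J T (w T) \<le> (\<Sum>i<m. w T i * grad m n P J T (w T) i) + real n"
      unfolding loss_def grad_def by (rule loss_upper[OF pt])
    also have "(\<Sum>i<m. w T i * grad m n P J T (w T) i) \<le> (\<Sum>i<m. w T i * \<gamma>)"
      using rw[OF tm] rg[OF tm] by (intro sum_mono mult_left_mono) auto
    also have "(\<Sum>i<m. w T i * \<gamma>) = \<gamma>" using rw[OF tm] by (simp add: sum_distrib_right[symmetric])
    finally have "loss m n P J T (w T) \<le> \<gamma> + real n" by simp
    moreover have "0 \<le> loss m n P J T u" unfolding loss_def by (rule loss_nonneg[OF pt])
    ultimately show ?thesis using etap by (intro mult_left_mono) auto
  qed
  define Pm where "Pm = real m powr (1-a)"
  define Qm where "Qm = real m powr a"
  have PQ: "Pm * Qm = real m" unfolding Pm_def Qm_def using mpos by (simp add: powr_add[symmetric])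
  have Pm1: "1 \<le> Pm" unfolding Pm_def using m a by (intro ge_one_powr_ge_zero) auto
  have Qp: "0 < Qm" unfolding Qm_def using mpos by simp
  have MM: "M * M = real m * Qm"
  proof -
    have "M * M = real m powr ((1+a)/2 + (1+a)/2)" unfolding M_def by (simp only: powr_add)
    also have "(1+a)/2 + (1+a)/2 = 1 + a" by simp
    also have "real m powr (1 + a) = real m powr 1 * real m powr a" by (simp only: powr_add)
    finally show ?thesis using mpos unfolding Qm_def by simp
  qed
  have TL: "real T * lam^2 = 1 / (real m * Qm)"
  proof -
    have "real T * lam^2 = real T / (sqrt T * sqrt T * (M * M))" unfolding lam_eq
      by (simp add: power2_eq_square field_simps)
    also have "sqrt T * sqrt T = real T" by simp
    finally show ?thesis using T1 MM by simp
  qed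
  have b2: "\<beta> \<le> 2" "0 < \<beta>" using a unfolding \<beta>_def by (auto simp: field_simps)
  have mm: "1 + (11/10) * real m \<le> (21/10) * real m" using m by simp
  have first: "real T * (\<beta> * D^2) \<le> (441/50) * Pm"
  proof -
    have "real T * (\<beta> * D^2) = \<beta> * (1 + (11/10) * real m)^2 * (real T * lam^2)"
      unfolding D_def by (simp add: power_mult_distrib)
    also have "\<dots> = \<beta> * (1 + (11/10) * real m)^2 / (real m * Qm)" using TL by simp
    also have "\<dots> \<le> 2 * ((21/10) * real m)^2 / (real m * Qm)"
      using b2 mm m Qp by (intro divide_right_mono mult_mono power_mono) auto
    also have "\<dots> = (441/50) * (real m / Qm)" using mpos Qp by (simp add: power2_eq_square field_simps)
    also have "real m / Qm = Pm" using PQ Qp by (simp add: field_simps)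
    finally show ?thesis .
  qed
  have second: "real T * (2 * lam * (11/10) * \<beta> * D * Qm) \<le> 231/25"
  proof -
    have "real T * (2 * lam * (11/10) * \<beta> * D * Qm) = (11/5) * \<beta> * (1 + (11/10) * real m) * Qm * (real T * lam^2)"
      unfolding D_def by (simp add: power2_eq_square)
    also have "\<dots> = (11/5) * \<beta> * ((1 + (11/10) * real m) / real m)" using TL Qp mpos by simp
    also have "\<dots> \<le> (11/5) * 2 * ((21/10 * real m) / real m)"
      using b2 mm mpos by (intro mult_mono divide_right_mono) auto
    also have "\<dots> = 231/25" using mpos by simp
    finally show ?thesis .
  qed
  have third: "2 * lam * (11/10) * (real m * ln (real m)) + \<eta> * (\<gamma> + real n) \<le> 2"
  proof -
    have "real n \<le> \<gamma>"
    proof -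
      have "real n * 1 \<le> real n * (12 * ln T)" using lnT by (intro mult_left_mono) auto
      then show ?thesis unfolding \<gamma>_def by simp
    qed
    then have "\<eta> * (\<gamma> + real n) \<le> 2 * lam" unfolding lam_def using etap
      by (simp add: distrib_left mult_left_mono)
    moreover have mln: "0 \<le> real m * ln (real m)" using m by simp
    moreover have "lam * ((11/5) * m * ln m + 2) \<le> (1 / sqrt T) * ((11/5) * m * ln m + 2)"
      using lam_le mln by (intro mult_right_mono) auto
    ultimately show ?thesis using C2 by (simp add: algebra_simps)
  qed
  have Kp: "0 \<le> K" unfolding K_def using b2 Dp lamp mpos by simp
  have TK: "real T * K \<le> (441/50) * Pm + 231/25"
  proof -
    have "real T * K = real T * (\<beta> * D^2) + real T * (2 * lam * (11/10) * \<beta> * D * Qm)"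
      unfolding K_def Qm_def by (simp add: algebra_simps)
    then show ?thesis using first second by linarith
  qed
  have main: "(\<Sum>t=1..T. loss m n P J t (w t)) - (\<Sum>t=1..T. loss m n P J t u) \<le> (20 + 1/a) * Pm / \<eta>"
    if u: "u \<in> prob_simplex m" for u
  proof -
    have split: "(\<Sum>t=1..T. f t) = f T + (\<Sum>t=1..<T. f t)" for f :: "nat \<Rightarrow> real"
      using T1 by (rule sum.last_plus)
    have "\<eta> * ((\<Sum>t=1..T. loss m n P J t (w t)) - (\<Sum>t=1..T. loss m n P J t u))
        = \<eta> * ((\<Sum>t=1..<T. loss m n P J t (w t)) - (\<Sum>t=1..<T. loss m n P J t u))
          + \<eta> * (loss m n P J T (w T) - loss m n P J T u)"
    proof -
      have s1: "(\<Sum>t=1..T. loss m n P J t (w t)) = loss m n P J T (w T) + (\<Sum>t=1..<T. loss m n P J t (w t))"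
        by (rule split)
      have s2: "(\<Sum>t=1..T. loss m n P J t u) = loss m n P J T u + (\<Sum>t=1..<T. loss m n P J t u)"
        by (rule split)
      show ?thesis unfolding s1 s2 by (simp add: algebra_simps)
    qed
    also have "\<dots> \<le> ((B u 1 - B u T) + real (T - 1) * K + 2 * lam * (11/10) * (\<Psi> T - \<Psi> 1))
          + \<eta> * (\<gamma> + real n)"
      using tele[OF u] lastT[OF u] by linarith
    also have "\<dots> \<le> (Pm - 1) / a + real T * K + 2 * lam * (11/10) * (real m * ln (real m)) + \<eta> * (\<gamma> + real n)"
    proof -
      have "real (T - 1) * K \<le> real T * K" using Kp by (intro mult_right_mono) auto
      moreover have "2 * lam * (11/10) * (\<Psi> T - \<Psi> 1) \<le> 2 * lam * (11/10) * (real m * ln (real m))"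
        using PsiT Psi1 lamp by (intro mult_left_mono) auto
      ultimately show ?thesis using B1[OF u] BT[OF u] unfolding Pm_def by linarith
    qed
    also have "\<dots> \<le> (20 + 1/a) * Pm"
    proof -
      have f1: "(Pm - 1) / a = Pm / a - 1 / a" by (simp add: diff_divide_distrib)
      have f2: "(20 + 1/a) * Pm = 20 * Pm + Pm / a" by (simp add: algebra_simps)
      have f3: "2 \<le> 1 / a" using a by (simp add: field_simps)
      note facts = f1 f2 f3 TK third Pm1
      show ?thesis
      proof -
        have h1: "(Pm - 1) / a + real T * K + 2 * lam * (11/10) * (real m * ln (real m)) + \<eta> * (\<gamma> + real n)
            \<le> (Pm / a - 1 / a) + ((441/50) * Pm + 231/25) + 2"
          using facts by linarith
        have h2: "(Pm / a - 1 / a) + ((441/50) * Pm + 231/25) + 2 \<le> 20 * Pm + Pm / a"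
          using f3 Pm1 by linarith
        show ?thesis using h1 h2 f2 by linarith
      qed
    qed
    finally have "\<eta> * ((\<Sum>t=1..T. loss m n P J t (w t)) - (\<Sum>t=1..T. loss m n P J t u)) \<le> (20 + 1/a) * Pm" .
    then show ?thesis using etap by (simp add: field_simps mult.commute)
  qed
  have target: "(20 + 1/a) * Pm / \<eta> = (240 + 12/a) * real m powr ((3-a)/2) * real n * sqrt T * ln T"
  proof -
    have e3: "real m powr ((3-a)/2) = M * Pm"
    proof -
      have "M * Pm = real m powr ((1+a)/2 + (1-a))" unfolding M_def Pm_def by (simp only: powr_add)
      also have "(1+a)/2 + (1-a) = (3-a)/2" by simp
      finally show ?thesis by simp
    qed
    have "(20 + 1/a) * Pm / \<eta> = (20 + 1/a) * Pm * (sqrt T * ln T * (12 * M * real n))"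
      unfolding eta_def' by simp
    also have "\<dots> = (240 + 12/a) * (M * Pm) * real n * sqrt T * ln T"
      by (simp add: algebra_simps)
    finally show ?thesis using e3 by simp
  qed
  have ne: "prob_simplex m \<noteq> {}"
  proof -
    have "w 1 \<in> prob_simplex m" using rw[of 1] T1 unfolding prob_simplex_def by (auto simp: less_imp_le)
    then show ?thesis by blast
  qed
  have "(\<Sum>t=1..T. loss m n P J t (w t)) - (20 + 1/a) * Pm / \<eta> \<le> (INF u\<in>prob_simplex m. \<Sum>t=1..T. loss m n P J t u)"
    using main by (intro cINF_greatest[OF ne]) (simp add: algebra_simps)
  then show ?thesis unfolding regret_def using target by simp
qed



lemma inv_sqrt_powr:
  fixes x :: real assumes "0 \<le> x" shows "1 / sqrt x = x powr (-1/2)"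
proof -
  have "x powr (-(1/2)) = inverse (x powr (1/2))" by (rule powr_minus)
  also have "x powr (1/2) = sqrt x" by (rule powr_half_sqrt[OF assms])
  finally have "x powr (-(1/2)) = inverse (sqrt x)" .
  moreover have "(-1/2::real) = -(1/2)" by simp
  ultimately show ?thesis by (simp only: divide_inverse mult_1)
qed

lemma sqrt_powr_half:
  fixes x :: real assumes "0 \<le> x" shows "sqrt x = x powr (1/2)"
  by (rule powr_half_sqrt[OF assms, symmetric])

lemma eventually_conds:
  fixes a :: real and m :: nat
  assumes a: "0 < a" "a < 1/2" and m: "1 \<le> m"
  shows "eventually (\<lambda>T::nat. 3 \<le> T \<and> (1 / sqrt T) * (1 + (4 * m * sqrt T) powr (a/(1-a))) \<le> 1/30
      \<and> (1 / sqrt T) * ((11/5) * m * ln m + 2) \<le> 2) sequentially"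
proof -
  define b where "b = a/(1-a)"
  have b: "0 \<le> b" "b < 1" using a by (auto simp: b_def field_simps)
  have L1: "((\<lambda>T::nat. real T powr (-1/2)) \<longlongrightarrow> 0) sequentially"
    by (rule tendsto_neg_powr) (auto intro: filterlim_real_sequentially)
  have L2: "((\<lambda>T::nat. real T powr ((b-1)/2)) \<longlongrightarrow> 0) sequentially"
    using b by (intro tendsto_neg_powr filterlim_real_sequentially) auto
  have L: "((\<lambda>T::nat. real T powr (-1/2) + (4 * real m) powr b * real T powr ((b-1)/2)) \<longlongrightarrow> 0) sequentially"
    using tendsto_add[OF L1 tendsto_mult_right_zero[OF L2, of "(4 * real m) powr b"]] by simp
  have eq: "(1 / sqrt T) * (1 + (4 * m * sqrt T) powr b) = real T powr (-1/2) + (4 * real m) powr b * real T powr ((b-1)/2)"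
    if T: "1 \<le> T" for T :: nat
  proof -
    have Tp: "0 < real T" using T by simp
    have s: "sqrt T = real T powr (1/2)" by (rule sqrt_powr_half) simp
    have i: "1 / sqrt T = real T powr (-1/2)" by (rule inv_sqrt_powr) simp
    have "(real (4 * m) * sqrt T) powr b = real (4 * m) powr b * (sqrt T) powr b"
      by (rule powr_mult)
    also have "real (4 * m) = 4 * real m" by simp
    also have "(sqrt T) powr b = (real T powr (1/2)) powr b" by (simp only: s)
    also have "(real T powr (1/2)) powr b = real T powr (1/2 * b)" by (rule powr_powr)
    also have "1/2 * b = b/2" by simp
    finally have p0: "(4 * real m * sqrt T) powr b = (4 * real m) powr b * real T powr (b/2)" .
    then have p: "(real (4 * m) * sqrt T) powr b = (4 * real m) powr b * real T powr (b/2)" by simp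
    have "(1 / sqrt T) * (1 + (4 * m * sqrt T) powr b) = real T powr (-1/2) + (4 * real m) powr b * (real T powr (-1/2) * real T powr (b/2))"
      unfolding i p by (simp add: algebra_simps)
    also have "real T powr (-1/2) * real T powr (b/2) = real T powr (-1/2 + b/2)" by (simp only: powr_add)
    also have "-1/2 + b/2 = (b-1)/2" by (simp add: field_simps)
    finally show ?thesis .
  qed
  have E1: "eventually (\<lambda>T::nat. (1 / sqrt T) * (1 + (4 * m * sqrt T) powr b) < 1/30) sequentially"
  proof -
    have "eventually (\<lambda>T::nat. real T powr (-1/2) + (4 * real m) powr b * real T powr ((b-1)/2) < 1/30) sequentially"
      using L by (rule order_tendstoD) simp
    moreover have "eventually (\<lambda>T::nat. 1 \<le> T) sequentially" by (rule eventually_ge_at_top)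
    ultimately show ?thesis
    proof eventually_elim
      case (elim T)
      then show ?case using eq[of T] by linarith
    qed
  qed
  have E2: "eventually (\<lambda>T::nat. (1 / sqrt T) * ((11/5) * m * ln m + 2) < 2) sequentially"
  proof -
    have "((\<lambda>T::nat. real T powr (-1/2) * ((11/5) * m * ln m + 2)) \<longlongrightarrow> 0) sequentially"
      using tendsto_mult_left_zero[OF L1] by simp
    then have "eventually (\<lambda>T::nat. real T powr (-1/2) * ((11/5) * m * ln m + 2) < 2) sequentially"
      by (rule order_tendstoD) simp
    moreover have "eventually (\<lambda>T::nat. 1 \<le> T) sequentially" by (rule eventually_ge_at_top)
    ultimately show ?thesis
    proof eventually_elim
      case (elim T)
      have "1 / sqrt T = real T powr (-1/2)" by (rule inv_sqrt_powr) simp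
      then show ?case using elim by simp
    qed
  qed
  have E0: "eventually (\<lambda>T::nat. 3 \<le> T) sequentially" by (rule eventually_ge_at_top)
  show ?thesis using E0 E1 E2 unfolding b_def by eventually_elim auto
qed

theorem corollary2:
  fixes \<alpha> :: real and m n :: nat
  assumes "0 < \<alpha>" and "\<alpha> < 1/2" and "1 \<le> m" and "1 \<le> n"
  shows "\<exists>T0::nat. \<forall>T\<ge>T0. \<forall>P J w.
           alg1_run \<alpha> m n T P J w \<and> small_gradient m n T P J w \<longrightarrow>
           regret m n T P J w \<le>
             (240 + 12 / \<alpha>) * real m powr ((3 - \<alpha>) / 2) * real n * sqrt T * ln T"
proof -
  define Q where "Q = (\<lambda>T::nat. 3 \<le> T \<and> (1 / sqrt T) * (1 + (4 * m * sqrt T) powr (\<alpha>/(1-\<alpha>))) \<le> 1/30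
      \<and> (1 / sqrt T) * ((11/5) * m * ln m + 2) \<le> 2)"
  have "eventually Q sequentially" unfolding Q_def by (rule eventually_conds[OF assms(1,2,3)])
  then have "\<exists>T0. \<forall>T\<ge>T0. Q T" by (simp only: eventually_sequentially)
  then obtain T0 where T0: "\<forall>T\<ge>T0. Q T" by (rule exE)
  show ?thesis
  proof (intro exI allI impI)
    fix T P J w assume T: "T0 \<le> T" and h: "alg1_run \<alpha> m n T P J w \<and> small_gradient m n T P J w"
    have QT: "Q T" using T0 T by blast
    have c1: "3 \<le> T" using QT unfolding Q_def by (rule conjunct1)
    have c2: "(1 / sqrt T) * (1 + (4 * m * sqrt T) powr (\<alpha>/(1-\<alpha>))) \<le> 1/30"
      using QT unfolding Q_def by (rule conjunct1[OF conjunct2])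
    have c3: "(1 / sqrt T) * ((11/5) * m * ln m + 2) \<le> 2"
      using QT unfolding Q_def by (rule conjunct2[OF conjunct2])
    have h1: "alg1_run \<alpha> m n T P J w" using h by (rule conjunct1)
    have h2: "small_gradient m n T P J w" using h by (rule conjunct2)
    show "regret m n T P J w \<le> (240 + 12 / \<alpha>) * real m powr ((3 - \<alpha>) / 2) * real n * sqrt T * ln T"
      by (rule run_bound[OF assms(1,2,3,4) c1 h1 h2 c2 c3])
  qed
qed


end
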